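(* Let $q$ be a prime power and $P(x)=x^{q^n}+a_{n-1}(t)x^{q^{n-1}}+\cdots+a_1(t)x^q+a_0(t)x$ with all $a_i(t)\in\mathbb{F}_q[t]$, and let $G$ be the Galois group of $P$ over $\mathbb{F}_q(t)$, acting on the $\mathbb{F}_q$-space $V$ of roots of $P$. Suppose that $a_0(\lambda)\ne0$ for some $\lambda\in\mathbb{F}_q$. Then there is an element of $G$ that acts as a cyclic linear transformation of $V$ whose minimal polynomial is \[x^n+a_{n-1}(\lambda)x^{n-1}+\cdots+a_1(\lambda)x+a_0(\lambda).\]
   Context: A linear transformation of $V$ is cyclic if there is a vector $v$ such that $v,\sigma v,\sigma^2v,\dots$ span $V$. *)

theory Defs
  imports "HOL-Algebra.Algebraic_Closure_Type" "HOL-Computational_Algebra.Fraction_Field"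
begin

text \<open>Conventions. For a finite field 'k = F_q, the rational function field F_q(t) is
  the type ('k poly) fract, and all roots are taken in its algebraic closure
  ('k poly fract) alg_closure.\<close>

type_synonym 'k ratfun = "'k poly fract"
type_synonym 'k ac = "'k poly fract alg_closure"

definition emb_K :: "'k::field ratfun \<Rightarrow> 'k ac" where
  "emb_K r = to_ac r"

definition emb_poly :: "'k::field poly \<Rightarrow> 'k ac" where
  "emb_poly p = to_ac (Fract p 1)"

definition emb_const :: "'k::field \<Rightarrow> 'k ac" where
  "emb_const c = emb_poly [:c:]"

definition addP :: "nat \<Rightarrow> (nat \<Rightarrow> 'k::{finite,field} poly) \<Rightarrow> 'k ac \<Rightarrow> 'k ac" where
  "addP n a x = x ^ (card (UNIV :: 'k set) ^ n) + (\<Sum>i<n. emb_poly (a i) * x ^ (card (UNIV :: 'k set) ^ i))"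

definition roots_addP :: "nat \<Rightarrow> (nat \<Rightarrow> 'k::{finite,field} poly) \<Rightarrow> 'k ac set" where
  "roots_addP n a = {x. addP n a x = 0}"

definition is_subfield :: "'a::field set \<Rightarrow> bool" where
  "is_subfield S \<longleftrightarrow> 0 \<in> S \<and> 1 \<in> S \<and> (\<forall>x\<in>S. \<forall>y\<in>S. x + y \<in> S \<and> x * y \<in> S)
     \<and> (\<forall>x\<in>S. - x \<in> S \<and> inverse x \<in> S)"

definition split_field :: "nat \<Rightarrow> (nat \<Rightarrow> 'k::{finite,field} poly) \<Rightarrow> 'k ac set" where
  "split_field n a = \<Inter>{S. is_subfield S \<and> range emb_K \<union> roots_addP n a \<subseteq> S}"

definition galois_group :: "nat \<Rightarrow> (nat \<Rightarrow> 'k::{finite,field} poly) \<Rightarrow> ('k ac \<Rightarrow> 'k ac) set" where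
  "galois_group n a = {\<sigma>. bij_betw \<sigma> (split_field n a) (split_field n a)
      \<and> (\<forall>x\<in>split_field n a. \<forall>y\<in>split_field n a. \<sigma> (x + y) = \<sigma> x + \<sigma> y \<and> \<sigma> (x * y) = \<sigma> x * \<sigma> y)
      \<and> (\<forall>r. \<sigma> (emb_K r) = emb_K r)}"

definition poly_op :: "'k::{finite,field} poly \<Rightarrow> ('k ac \<Rightarrow> 'k ac) \<Rightarrow> 'k ac \<Rightarrow> 'k ac" where
  "poly_op m \<sigma> v = (\<Sum>i\<le>degree m. emb_const (coeff m i) * (\<sigma> ^^ i) v)"

definition cyclic_on :: "'k::{finite,field} itself \<Rightarrow> 'k ac set \<Rightarrow> ('k ac \<Rightarrow> 'k ac) \<Rightarrow> bool" where
  "cyclic_on _ V \<sigma> \<longleftrightarrow> (\<exists>v\<in>V. \<forall>w\<in>V. \<exists>N (c::nat \<Rightarrow> 'k).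
      w = (\<Sum>i<N. emb_const (c i) * (\<sigma> ^^ i) v))"

definition is_min_poly_on :: "'k ac set \<Rightarrow> ('k ac \<Rightarrow> 'k ac) \<Rightarrow> 'k::{finite,field} poly \<Rightarrow> bool" where
  "is_min_poly_on V \<sigma> m \<longleftrightarrow> lead_coeff m = 1 \<and> (\<forall>w\<in>V. poly_op m \<sigma> w = 0)
     \<and> (\<forall>p. p \<noteq> 0 \<and> (\<forall>w\<in>V. poly_op p \<sigma> w = 0) \<longrightarrow> degree m \<le> degree p)"

end

theory Submission
  imports Defs "HOL-Number_Theory.Residues" "HOL-Library.Cardinality" "HOL-Library.FuncSet"
    "HOL-Computational_Algebra.Polynomial_FPS" "HOL-Computational_Algebra.Formal_Laurent_Series"
begin

unbundle fps_syntax


lemma card_k_ge2: "card (UNIV :: 'k::{finite,field} set) \<ge> 2"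
proof -
  have "{0, 1} \<subseteq> (UNIV :: 'k set)" by auto
  hence "card {0, (1::'k)} \<le> card (UNIV :: 'k set)" by (rule card_mono[OF finite_class.finite_UNIV])
  thus ?thesis by simp
qed

lemma CHAR_k_prime: "prime CHAR('k::{finite,field})"
  by (rule prime_CHAR_semidom) (rule finite_imp_CHAR_pos[OF finite_class.finite_UNIV])

lemma pow_card_same: "(x::'k::{finite,field}) ^ card (UNIV::'k set) = x"
proof (cases "x = 0")
  case False
  have "x * (\<Prod>y\<in>UNIV-{0}. x * y) = x * x ^ (card (UNIV :: 'k set) - 1) * \<Prod>(UNIV-{0})"
    by (simp add: prod.distrib mult_ac)
  also have "x * x ^ (card (UNIV :: 'k set) - 1) = x ^ Suc (card (UNIV :: 'k set) - 1)"
    by (subst power_Suc) auto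
  also have "Suc (card (UNIV :: 'k set) - 1) = card (UNIV :: 'k set)"
    using finite_UNIV_card_ge_0[where ?'a = 'k] by simp
  also have "(\<Prod>y\<in>UNIV-{0}. x * y) = (\<Prod>y\<in>UNIV-{0}. y)"
    by (rule prod.reindex_bij_witness[of _ "\<lambda>y. y / x" "\<lambda>y. x * y"]) (use False in auto)
  finally show ?thesis
    by simp
qed (use finite_UNIV_card_ge_0[where ?'a = 'k] in auto)

lemma pow_card_power_same: "(x::'k::{finite,field}) ^ (card (UNIV::'k set) ^ i) = x"
  by (induction i) (simp_all add: pow_card_same power_mult)

lemma CHAR_fract: "CHAR('a::idom fract) = CHAR('a)"
proof (rule CHAR_eqI)
  show "of_nat CHAR('a) = (0 :: 'a fract)"
    by (simp add: of_nat_fract Zero_fract_def eq_fract)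
next
  fix x assume "of_nat x = (0 :: 'a fract)"
  hence "(of_nat x :: 'a) = 0" by (simp add: of_nat_fract Zero_fract_def eq_fract)
  thus "CHAR('a) dvd x" by (simp add: of_nat_eq_0_iff_char_dvd)
qed

lemma CHAR_ac: "CHAR('k::field ac) = CHAR('k)"
  by (simp add: CHAR_fract)

lemma card_is_char_power: "\<exists>e. card (UNIV :: 'k::{finite,field} set) = CHAR('k) ^ e"
proof -
  define p where "p = CHAR('k)"
  define q where "q = card (UNIV :: 'k set)"
  have pp: "prime p" unfolding p_def by (rule CHAR_k_prime)
  have q2: "q \<ge> 2" unfolding q_def by (rule card_k_ge2)
  have pq: "p dvd q" unfolding p_def q_def by (rule CHAR_dvd_CARD)
  obtain m where qm: "q = p ^ multiplicity p q * m" and nd: "\<not> p dvd m"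
    using q2 pp by (metis multiplicity_decompose' not_prime_unit not_numeral_le_zero)
  define e where "e = multiplicity p q"
  have qm': "q = p ^ e * m" using qm e_def by simp
  define F where "F = (\<lambda>x::'k. x ^ (p ^ e))"
  have Fadd: "F (x + y) = F x + F y" for x y
    unfolding F_def using pp by (intro freshmans_dream') (auto simp: p_def)
  have Finj: "inj F"
  proof (rule injI)
    fix x y assume "F x = F y"
    have "F (x - y) + F y = F x" using Fadd[of "x - y" y] by simp
    hence "F (x - y) = 0" using \<open>F x = F y\<close> by simp
    hence "x - y = 0" unfolding F_def by simp
    thus "x = y" by simp
  qed
  hence Fsurj: "surj F" using finite_UNIV_inj_surj[OF finite_class.finite_UNIV] by blast
  have G: "(F c) ^ m = c" for c
  proof -
    have "(F c) ^ m = c ^ q" unfolding F_def qm' by (simp add: power_mult)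
    thus ?thesis unfolding q_def by (simp add: pow_card_same)
  qed
  have Gadd: "(x + 1) ^ m = x ^ m + 1" for x :: 'k
  proof -
    obtain c where c: "x = F c" using Fsurj by (metis surjD)
    have F1: "F 1 = 1" unfolding F_def by simp
    have "x + 1 = F (c + 1)" using c Fadd F1 by simp
    hence "(x + 1) ^ m = c + 1" using G by simp
    also have "\<dots> = x ^ m + 1" using G c by simp
    finally show ?thesis .
  qed
  have m0: "m \<noteq> 0" using qm' q2 by (metis mult_0_right not_numeral_le_zero)
  have "m \<le> 1"
  proof (rule ccontr)
    assume "\<not> m \<le> 1"
    hence m2: "m \<ge> 2" by simp
    have mq: "m < q"
    proof (cases "e = 0")
      case True
      hence "q = m" using qm' by simp
      thus ?thesis using pq nd by simp
    next
      case False
      have "p ^ e \<ge> 2" using False pp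
        by (metis One_nat_def Suc_1 Suc_leI not_gr0 prime_gt_1_nat power_gt1_lemma power_one_right
              one_less_power)
      thus ?thesis using qm' m0 by (metis mult_le_mono1 nat_mult_1 not_less linorder_not_le
            less_le_trans one_less_numeral_iff semiring_norm(76) le_less mult.commute nat_mult_less_cancel_disj)
    qed
    define g :: "'k poly" where "g = [:1,1:] ^ m - monom 1 m - 1"
    have cg: "coeff g (m - 1) = of_nat m"
    proof -
      have "coeff ([:1,1:] ^ m) (m - 1) = (of_nat (m choose (m - 1)) :: 'k)"
        by (subst coeff_linear_poly_power) auto
      also have "m choose (m - 1) = m choose (m - (m - 1))" by (rule binomial_symmetric) simp
      also have "m - (m - 1) = 1" using m2 by simp
      also have "m choose 1 = m" by simp
      finally show ?thesis using m2 unfolding g_def by (simp add: coeff_monom)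
    qed
    have "of_nat m \<noteq> (0::'k)" using nd by (simp add: of_nat_eq_0_iff_char_dvd p_def)
    hence g0: "g \<noteq> 0" using cg by auto
    have dg: "degree g \<le> m"
      unfolding g_def
      by (intro degree_diff_le degree_power_le[THEN order.trans]) (auto simp: degree_monom_le)
    have "\<forall>x. poly g x = 0" unfolding g_def using Gadd by (simp add: poly_monom add.commute)
    hence "{x. poly g x = 0} = UNIV" by auto
    hence "q \<le> degree g" using card_poly_roots_bound[OF g0] unfolding q_def by simp
    thus False using dg mq by simp
  qed
  hence "m = 1" using m0 by simp
  thus ?thesis using qm' unfolding p_def q_def by auto
qed

lemma frob_add_gen:
  fixes x y :: "'b::comm_semiring_1"
  assumes "CHAR('b) = CHAR('k::{finite,field})"
  shows "(x + y) ^ (card (UNIV::'k set) ^ i) = x ^ (card (UNIV::'k set) ^ i) + y ^ (card (UNIV::'k set) ^ i)"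
proof -
  obtain e where e: "card (UNIV :: 'k set) = CHAR('k) ^ e" using card_is_char_power by blast
  show ?thesis
    using CHAR_k_prime[where 'k='k] assms
    by (intro freshmans_dream') (auto simp: e power_mult[symmetric])
qed


lemma q_pos: "CARD('k::{finite,field}) ^ i > 0"
  using card_k_ge2[where 'k='k] by simp

lemma zero_pow_q [simp]: "(0::'a::semiring_1) ^ (CARD('k::{finite,field}) ^ i) = 0"
  using q_pos[where 'k='k and i=i] by (simp add: power_0_left)

lemma Fract_add1: "Fract (a + b) 1 = Fract a 1 + Fract (b::'a::idom) 1"
  by simp
lemma Fract_mult1: "Fract (a * b) 1 = Fract a 1 * Fract (b::'a::idom) 1"
  by simp
lemma Fract_uminus1: "Fract (- a) 1 = - Fract (a::'a::idom) 1"
  by simp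
lemma emb_poly_0 [simp]: "emb_poly 0 = 0"
  by (simp add: emb_poly_def Zero_fract_def[symmetric])
lemma emb_poly_1 [simp]: "emb_poly 1 = 1"
  by (simp add: emb_poly_def One_fract_def[symmetric])
lemma emb_poly_add [simp]: "emb_poly (a + b) = emb_poly a + emb_poly b"
  by (simp only: emb_poly_def Fract_add1 to_ac_add)
lemma emb_poly_mult [simp]: "emb_poly (a * b) = emb_poly a * emb_poly b"
  by (simp only: emb_poly_def Fract_mult1 to_ac_mult)
lemma emb_poly_uminus [simp]: "emb_poly (- a) = - emb_poly a"
  by (simp only: emb_poly_def Fract_uminus1 to_ac_minus)
lemma emb_poly_diff [simp]: "emb_poly (a - b) = emb_poly a - emb_poly b"
  using emb_poly_add[of a "-b"] by simp
lemma emb_poly_eq_iff [simp]: "emb_poly a = emb_poly b \<longleftrightarrow> a = b"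
  by (simp add: emb_poly_def eq_fract)
lemma emb_const_0 [simp]: "emb_const 0 = 0"
  by (simp add: emb_const_def)
lemma emb_const_1 [simp]: "emb_const 1 = 1"
  by (simp add: emb_const_def one_pCons[symmetric])
lemma emb_const_add [simp]: "emb_const (a + b) = emb_const a + emb_const b"
  by (simp add: emb_const_def flip: emb_poly_add)
lemma emb_const_mult [simp]: "emb_const (a * b) = emb_const a * emb_const b"
  by (simp add: emb_const_def flip: emb_poly_mult)
lemma emb_const_uminus [simp]: "emb_const (- a) = - emb_const a"
  by (simp add: emb_const_def flip: emb_poly_uminus)
lemma emb_const_diff [simp]: "emb_const (a - b) = emb_const a - emb_const b"
  by (simp add: emb_const_def flip: emb_poly_diff)
lemma emb_const_power [simp]: "emb_const (a ^ n) = emb_const a ^ n"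
  by (induction n) simp_all
lemma emb_const_eq_iff [simp]: "emb_const a = emb_const b \<longleftrightarrow> a = b"
  by (simp add: emb_const_def)
lemma emb_const_eq_0_iff [simp]: "emb_const a = 0 \<longleftrightarrow> a = 0"
  using emb_const_eq_iff[of a 0] by simp
lemma emb_const_sum: "emb_const (sum f A) = (\<Sum>x\<in>A. emb_const (f x))"
  by (induction A rule: infinite_finite_induct) simp_all

lemma emb_const_pow_q [simp]:
  fixes c :: "'k::{finite,field}"
  shows "emb_const c ^ (CARD('k) ^ i) = emb_const c"
  by (simp add: pow_card_power_same flip: emb_const_power)

lemma frob_ac_add:
  fixes x y :: "'k::{finite,field} ac"
  shows "(x + y) ^ (CARD('k) ^ i) = x ^ (CARD('k) ^ i) + y ^ (CARD('k) ^ i)"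
  by (rule frob_add_gen) (simp add: CHAR_fract)

lemma frob_gen_sum:
  fixes f :: "'a \<Rightarrow> 'b::comm_semiring_1"
  assumes "CHAR('b) = CHAR('k::{finite,field})"
  shows "(sum f A) ^ (CARD('k) ^ i) = (\<Sum>x\<in>A. f x ^ (CARD('k) ^ i))"
proof (induction A rule: infinite_finite_induct)
  case (empty)
  show ?case using zero_pow_q[where 'k='k and 'a='b] by simp
next
  case (infinite A)
  thus ?case using zero_pow_q[where 'k='k and 'a='b] by simp
next
  case (insert x F)
  thus ?case using frob_add_gen[OF assms] by simp
qed


lemma frob_ac_mult: "(x * y :: 'a::comm_monoid_mult) ^ n = x ^ n * y ^ n"
  by (rule power_mult_distrib)

lemma frob_ac_neg:
  fixes x :: "'k::{finite,field} ac"
  shows "(- x) ^ (CARD('k) ^ i) = - (x ^ (CARD('k) ^ i))"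
proof -
  have "(- x + x) ^ (CARD('k) ^ i) = (- x) ^ (CARD('k) ^ i) + x ^ (CARD('k) ^ i)"
    by (rule frob_ac_add)
  hence "0 = (- x) ^ (CARD('k) ^ i) + x ^ (CARD('k) ^ i)" using zero_pow_q[where 'k='k] by simp
  thus ?thesis by (simp add: eq_neg_iff_add_eq_0)
qed

lemma frob_ac_diff:
  fixes x y :: "'k::{finite,field} ac"
  shows "(x - y) ^ (CARD('k) ^ i) = x ^ (CARD('k) ^ i) - y ^ (CARD('k) ^ i)"
  using frob_ac_add[of x "-y" i] frob_ac_neg[of y i] by simp

lemma frob_ac_sum:
  fixes f :: "'a \<Rightarrow> 'k::{finite,field} ac"
  shows "(sum f A) ^ (CARD('k) ^ i) = (\<Sum>x\<in>A. f x ^ (CARD('k) ^ i))"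
  by (rule frob_gen_sum) (simp add: CHAR_fract)

section \<open>Additive operator of an F_q polynomial\<close>

definition Lop :: "'k::{finite,field} poly \<Rightarrow> 'k ac \<Rightarrow> 'k ac" where
  "Lop g x = (\<Sum>i\<le>degree g. emb_const (coeff g i) * x ^ (CARD('k) ^ i))"

lemma Lop_range:
  fixes g :: "'k::{finite,field} poly"
  assumes "degree g < N"
  shows "Lop g x = (\<Sum>i<N. emb_const (coeff g i) * x ^ (CARD('k) ^ i))"
proof -
  have "(\<Sum>i<N. emb_const (coeff g i) * x ^ (CARD('k) ^ i)) =
        (\<Sum>i\<le>degree g. emb_const (coeff g i) * x ^ (CARD('k) ^ i))"
    using assms by (intro sum.mono_neutral_right) (auto simp: coeff_eq_0)
  thus ?thesis unfolding Lop_def by simp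
qed

lemma Lop_pCons:
  fixes g :: "'k::{finite,field} poly"
  shows "Lop (pCons c g) x = emb_const c * x + (Lop g x) ^ CARD('k)"
proof -
  define N where "N = Suc (degree g)"
  have dg: "degree g < N" unfolding N_def by simp
  have dpc: "degree (pCons c g) < Suc N" unfolding N_def
    by (metis degree_pCons_le le_imp_less_Suc)
  have "Lop (pCons c g) x = (\<Sum>i<Suc N. emb_const (coeff (pCons c g) i) * x ^ (CARD('k) ^ i))"
    by (rule Lop_range[OF dpc])
  also have "\<dots> = emb_const c * x + (\<Sum>i<N. emb_const (coeff g i) * x ^ (CARD('k) ^ Suc i))"
    by (subst sum.lessThan_Suc_shift) simp
  also have "(\<Sum>i<N. emb_const (coeff g i) * x ^ (CARD('k) ^ Suc i)) =
             (\<Sum>i<N. (emb_const (coeff g i) * x ^ (CARD('k) ^ i)) ^ CARD('k))"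
  proof (intro sum.cong refl)
    fix i
    have "emb_const (coeff g i) ^ CARD('k) = emb_const (coeff g i)"
      using emb_const_pow_q[of "coeff g i" 1] by simp
    thus "emb_const (coeff g i) * x ^ (CARD('k) ^ Suc i) =
          (emb_const (coeff g i) * x ^ (CARD('k) ^ i)) ^ CARD('k)"
      by (simp add: power_mult_distrib power_mult[symmetric] power_Suc2 mult.commute)
  qed
  also have "\<dots> = (\<Sum>i<N. emb_const (coeff g i) * x ^ (CARD('k) ^ i)) ^ CARD('k)"
    using frob_ac_sum[of "\<lambda>i. emb_const (coeff g i) * x ^ (CARD('k) ^ i)" "{..<N}" 1]
    by simp
  also have "(\<Sum>i<N. emb_const (coeff g i) * x ^ (CARD('k) ^ i)) = Lop g x"
    by (rule Lop_range[OF dg, symmetric])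
  finally show ?thesis .
qed

lemma Lop_zero_poly [simp]: "Lop 0 x = 0"
  by (simp add: Lop_def)

lemma Lop_1 [simp]: "Lop 1 x = x"
  by (simp add: Lop_def)

lemma Lop_const: "Lop [:c:] x = emb_const c * x"
  by (simp add: Lop_def)

lemma Lop_add_x: "Lop g (x + y) = Lop g x + Lop g y"
  unfolding Lop_def by (simp add: frob_ac_add distrib_left sum.distrib)

lemma Lop_0_x [simp]: "Lop g 0 = 0"
  unfolding Lop_def by simp

lemma Lop_neg_x: "Lop g (- x) = - Lop g x"
  using Lop_add_x[of g "-x" x] by (simp add: eq_neg_iff_add_eq_0)

lemma Lop_diff_x: "Lop g (x - y) = Lop g x - Lop g y"
  using Lop_add_x[of g x "-y"] Lop_neg_x[of g y] by simp

lemma Lop_scal_x: "Lop g (emb_const c * x) = emb_const c * Lop g x"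
  unfolding Lop_def by (simp add: power_mult_distrib sum_distrib_left mult_ac)

lemma Lop_sum_x: "Lop g (sum f A) = (\<Sum>a\<in>A. Lop g (f a))"
  by (induction A rule: infinite_finite_induct) (simp_all add: Lop_add_x)

lemma Lop_add_g: "Lop (g + h) x = Lop g x + Lop h x"
proof -
  define N where "N = Suc (max (degree g) (degree h))"
  have "degree (g + h) < N" "degree g < N" "degree h < N" unfolding N_def
    using degree_add_le_max[of g h] by auto
  thus ?thesis by (simp add: Lop_range sum.distrib distrib_right)
qed

lemma Lop_smult: "Lop (smult c g) x = emb_const c * Lop g x"
  unfolding Lop_def by (simp add: sum_distrib_left mult_ac)

lemma Lop_mult:
  fixes g :: "'k::{finite,field} poly"
  shows "Lop (g * h) x = Lop g (Lop h x)"
proof (induction g)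
  case (pCons c g)
  have "Lop (pCons c g * h) x = Lop (smult c h) x + Lop (pCons 0 (g * h)) x"
    by (simp add: Lop_add_g)
  also have "\<dots> = emb_const c * Lop h x + (Lop g (Lop h x)) ^ CARD('k)"
    by (simp add: Lop_smult Lop_pCons pCons.IH)
  also have "\<dots> = Lop (pCons c g) (Lop h x)" by (simp add: Lop_pCons)
  finally show ?case .
qed simp

lemma Lop_sum_g: "Lop (sum f A) x = (\<Sum>a\<in>A. Lop (f a) x)"
  by (induction A rule: infinite_finite_induct) (simp_all add: Lop_add_g)

lemma Lop_monom:
  fixes c :: "'k::{finite,field}"
  shows "Lop (monom c i) x = emb_const c * x ^ (CARD('k) ^ i)"
proof -
  have "Lop (monom c i) x = (\<Sum>j<Suc i. emb_const (coeff (monom c i) j) * x ^ (CARD('k) ^ j))"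
    by (rule Lop_range) (simp add: degree_monom_le le_imp_less_Suc)
  also have "\<dots> = (\<Sum>j<Suc i. if j = i then emb_const c * x ^ (CARD('k) ^ i) else 0)"
    by (intro sum.cong refl) (auto simp: coeff_monom)
  also have "\<dots> = emb_const c * x ^ (CARD('k) ^ i)" by simp
  finally show ?thesis .
qed

lemma Lop_monom1:
  fixes x :: "'k::{finite,field} ac"
  shows "Lop (monom 1 i) x = x ^ (CARD('k) ^ i)"
  using Lop_monom[of 1 i x] by simp


definition Qpoly :: "'k::{finite,field} poly \<Rightarrow> 'k ac poly" where
  "Qpoly g = (\<Sum>i\<le>degree g. monom (emb_const (coeff g i)) (CARD('k) ^ i))"

lemma poly_Qpoly: "poly (Qpoly g) x = Lop g x"
  by (simp add: Qpoly_def Lop_def poly_sum poly_monom)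

lemma q_gt1: "CARD('k::{finite,field}) > 1"
  using card_k_ge2[where 'k='k] by simp

lemma q_pow_inj: "CARD('k::{finite,field}) ^ i = CARD('k) ^ j \<longleftrightarrow> i = j"
  using q_gt1[where 'k='k] by (simp add: power_inject_exp)

lemma q_pow_le: "CARD('k::{finite,field}) ^ i \<le> CARD('k) ^ j \<longleftrightarrow> i \<le> j"
  using q_gt1[where 'k='k] by simp

lemma coeff_Qpoly_top:
  fixes g :: "'k::{finite,field} poly"
  shows "coeff (Qpoly g) (CARD('k) ^ degree g) = emb_const (lead_coeff g)"
proof -
  have "coeff (Qpoly g) (CARD('k) ^ degree g) =
        (\<Sum>i\<le>degree g. if i = degree g then emb_const (coeff g i) else 0)"
    unfolding Qpoly_def coeff_sum by (intro sum.cong refl) (auto simp: coeff_monom q_pow_inj)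
  thus ?thesis by simp
qed

lemma degree_Qpoly:
  fixes g :: "'k::{finite,field} poly"
  assumes "g \<noteq> 0"
  shows "degree (Qpoly g) = CARD('k) ^ degree g"
proof (rule antisym)
  show "degree (Qpoly g) \<le> CARD('k) ^ degree g"
  proof (rule degree_le, intro allI impI)
    fix k assume k: "CARD('k) ^ degree g < k"
    have "coeff (Qpoly g) k = (\<Sum>i\<le>degree g. 0)"
      unfolding Qpoly_def coeff_sum
    proof (intro sum.cong refl)
      fix i assume "i \<in> {..degree g}"
      hence "CARD('k) ^ i \<le> CARD('k) ^ degree g" by (simp add: q_pow_le)
      thus "coeff (monom (emb_const (coeff g i)) (CARD('k) ^ i)) k = 0"
        using k by (auto simp: coeff_monom)
    qed
    thus "coeff (Qpoly g) k = 0" by simp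
  qed
next
  show "CARD('k) ^ degree g \<le> degree (Qpoly g)"
    by (rule le_degree) (simp add: coeff_Qpoly_top assms)
qed

lemma Qpoly_nz:
  fixes g :: "'k::{finite,field} poly"
  assumes "g \<noteq> 0" shows "Qpoly g \<noteq> 0"
proof
  assume "Qpoly g = 0"
  hence "coeff (Qpoly g) (CARD('k) ^ degree g) = 0" by simp
  thus False by (simp add: coeff_Qpoly_top assms)
qed

lemma Lop_roots_finite:
  fixes g :: "'k::{finite,field} poly"
  assumes "g \<noteq> 0" shows "finite {x. Lop g x = 0}"
  using poly_roots_finite[OF Qpoly_nz[OF assms]] by (simp add: poly_Qpoly)

lemma Lop_roots_card:
  fixes g :: "'k::{finite,field} poly"
  assumes "g \<noteq> 0" shows "card {x. Lop g x = 0} \<le> CARD('k) ^ degree g"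
  using card_poly_roots_bound[OF Qpoly_nz[OF assms]] by (simp add: poly_Qpoly degree_Qpoly assms)

lemma Lop_surj:
  fixes g :: "'k::{finite,field} poly"
  assumes "degree g \<ge> 1" shows "\<exists>x. Lop g x = v"
proof -
  have g0: "g \<noteq> 0" using assms by auto
  define R where "R = Qpoly g - [:v:]"
  have "CARD('k) ^ degree g \<noteq> 0" using q_pos[where 'k='k] by simp
  hence "coeff R (CARD('k) ^ degree g) = emb_const (lead_coeff g)"
    unfolding R_def by (simp add: coeff_Qpoly_top coeff_pCons split: nat.split)
  hence "CARD('k) ^ degree g \<le> degree R" by (intro le_degree) (simp add: g0)
  moreover have "CARD('k) ^ degree g > 0" using q_pos[where 'k='k] by simp
  ultimately have "degree R > 0" by linarith
  then obtain x where "poly R x = 0" using alg_closed_imp_poly_has_root by blast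
  thus ?thesis unfolding R_def by (auto simp: poly_Qpoly)
qed

lemma Lop_nonzero_root:
  fixes g :: "'k::{finite,field} poly"
  assumes "degree g \<ge> 1" "coeff g 0 \<noteq> 0"
  shows "\<exists>z. z \<noteq> 0 \<and> Lop g z = 0"
proof -
  define R where "R = (\<Sum>i\<le>degree g. monom (emb_const (coeff g i)) (CARD('k) ^ i - 1))"
  have g0: "g \<noteq> 0" using assms by auto
  have polyR: "poly R z * z = Lop g z" for z
  proof -
    have "poly R z * z = (\<Sum>i\<le>degree g. emb_const (coeff g i) * (z ^ (CARD('k) ^ i - 1) * z))"
      unfolding R_def by (simp add: poly_sum poly_monom sum_distrib_left sum_distrib_right mult_ac)
    also have "\<dots> = Lop g z" unfolding Lop_def
    proof (intro sum.cong refl)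
      fix i
      have "Suc (CARD('k) ^ i - 1) = CARD('k) ^ i" using q_pos[where 'k='k and i=i] by simp
      hence "z ^ (CARD('k) ^ i - 1) * z = z ^ (CARD('k) ^ i)"
        using power_Suc2[of z "CARD('k) ^ i - 1"] by simp
      thus "emb_const (coeff g i) * (z ^ (CARD('k) ^ i - 1) * z) =
            emb_const (coeff g i) * z ^ (CARD('k) ^ i)" by simp
    qed
    finally show ?thesis .
  qed
  have ctop: "coeff R (CARD('k) ^ degree g - 1) = emb_const (lead_coeff g)"
  proof -
    have "coeff R (CARD('k) ^ degree g - 1) =
        (\<Sum>i\<le>degree g. if i = degree g then emb_const (coeff g i) else 0)"
      unfolding R_def coeff_sum
    proof (intro sum.cong refl)
      fix i
      have "CARD('k) ^ i - 1 = CARD('k) ^ degree g - 1 \<longleftrightarrow> i = degree g"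
      proof -
        have "CARD('k) ^ i > 0" "CARD('k) ^ degree g > 0" using q_pos[where 'k='k] by auto
        hence "CARD('k) ^ i - 1 = CARD('k) ^ degree g - 1 \<longleftrightarrow> CARD('k) ^ i = CARD('k) ^ degree g"
          by arith
        thus ?thesis by (simp add: q_pow_inj)
      qed
      thus "coeff (monom (emb_const (coeff g i)) (CARD('k) ^ i - 1)) (CARD('k) ^ degree g - 1) =
            (if i = degree g then emb_const (coeff g i) else 0)"
        by (auto simp: coeff_monom)
    qed
    thus ?thesis by simp
  qed
  have "CARD('k) ^ degree g \<ge> CARD('k) ^ 1" using assms(1) q_pow_le[where 'k='k] by blast
  hence "CARD('k) ^ degree g \<ge> 2" using card_k_ge2[where 'k='k] by simp
  moreover have "CARD('k) ^ degree g - 1 \<le> degree R" by (rule le_degree) (use ctop g0 in simp)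
  ultimately have "degree R > 0" by linarith
  then obtain z where z: "poly R z = 0" using alg_closed_imp_poly_has_root by blast
  have c0: "coeff R 0 = emb_const (coeff g 0)"
  proof -
    have "coeff R 0 = (\<Sum>i\<le>degree g. if i = 0 then emb_const (coeff g i) else 0)"
      unfolding R_def coeff_sum
    proof (intro sum.cong refl)
      fix i
      have "CARD('k) ^ i - 1 = 0 \<longleftrightarrow> i = 0"
        using q_pos[where 'k='k and i=i] q_pow_le[where 'k='k and i=i and j=0] by auto
      thus "coeff (monom (emb_const (coeff g i)) (CARD('k) ^ i - 1)) 0 =
            (if i = 0 then emb_const (coeff g i) else 0)"
        by (auto simp: coeff_monom)
    qed
    thus ?thesis by simp
  qed
  have "z \<noteq> 0"
  proof
    assume "z = 0"
    hence "coeff R 0 = 0" using z by (simp add: poly_0_coeff_0)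
    thus False using c0 assms(2) by simp
  qed
  moreover have "Lop g z = 0" using polyR[of z] z by simp
  ultimately show ?thesis by blast
qed

definition Gen :: "'k::{finite,field} poly \<Rightarrow> 'k ac \<Rightarrow> bool" where
  "Gen h v \<longleftrightarrow> Lop h v = 0 \<and> (\<forall>d. Lop d v = 0 \<longrightarrow> h dvd d)"

lemma Lop_comm: "Lop g (Lop h x) = Lop h (Lop g x)"
proof -
  have "Lop g (Lop h x) = Lop (g * h) x" by (rule Lop_mult[symmetric])
  also have "g * h = h * g" by (rule mult.commute)
  also have "Lop (h * g) x = Lop h (Lop g x)" by (rule Lop_mult)
  finally show ?thesis .
qed

definition irr :: "'a::field poly \<Rightarrow> bool" where
  "irr p \<longleftrightarrow> degree p \<ge> 1 \<and> (\<forall>r. r dvd p \<and> degree r \<ge> 1 \<longrightarrow> degree p \<le> degree r)"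

lemma irr_bezout:
  fixes p k :: "'a::field poly"
  assumes ip: "irr p"
  shows "p dvd k \<or> (\<exists>a b. a * p + b * k = 1)"
proof -
  define I where "I = {x. \<exists>a b. x = a * p + b * k}"
  have pI: "p \<in> I" unfolding I_def by (rule CollectI, rule exI[of _ 1], rule exI[of _ 0]) simp
  have p0: "p \<noteq> 0" using ip by (auto simp: irr_def)
  have Imod: "x \<in> I \<Longrightarrow> y \<in> I \<Longrightarrow> x mod y \<in> I" for x y
  proof -
    assume "x \<in> I" "y \<in> I"
    then obtain a b c d where x: "x = a * p + b * k" and y: "y = c * p + d * k"
      unfolding I_def by blast
    have "x mod y = x - (x div y) * y" by (simp add: minus_div_mult_eq_mod)
    also have "\<dots> = (a - (x div y) * c) * p + (b - (x div y) * d) * k"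
      unfolding x y by (simp add: algebra_simps)
    finally show ?thesis unfolding I_def by blast
  qed
  define d where "d = (LEAST n. \<exists>r\<in>I. r \<noteq> 0 \<and> degree r = n)"
  have "\<exists>r\<in>I. r \<noteq> 0 \<and> degree r = d"
    unfolding d_def by (rule LeastI_ex) (use pI p0 in blast)
  then obtain r where rI: "r \<in> I" and r0: "r \<noteq> 0" and rd: "degree r = d" by blast
  have rmin: "x \<in> I \<Longrightarrow> x \<noteq> 0 \<Longrightarrow> degree r \<le> degree x" for x
    unfolding rd d_def by (rule Least_le) blast
  have rdvd: "r dvd x" if "x \<in> I" for x
  proof (rule ccontr)
    assume "\<not> r dvd x"
    hence m0: "x mod r \<noteq> 0" by (simp add: mod_eq_0_iff_dvd)
    have "degree (x mod r) < degree r" by (rule degree_mod_less'[OF r0 m0])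
    moreover have "degree r \<le> degree (x mod r)" by (rule rmin[OF Imod[OF that rI] m0])
    ultimately show False by simp
  qed
  have kI: "k \<in> I" unfolding I_def by (rule CollectI, rule exI[of _ 0], rule exI[of _ 1]) simp
  show ?thesis
  proof (cases "degree r = 0")
    case True
    then obtain c where rc: "r = [:c:]" by (metis degree_0_id)
    hence c0: "c \<noteq> 0" using r0 by simp
    obtain a b where "r = a * p + b * k" using rI unfolding I_def by blast
    hence "smult (inverse c) r = smult (inverse c) a * p + smult (inverse c) b * k"
      by (simp add: smult_add_right)
    moreover have "smult (inverse c) r = 1" using rc c0 by simp
    ultimately have "smult (inverse c) a * p + smult (inverse c) b * k = 1" by simp
    thus ?thesis by blast
  next
    case False
    have rp: "r dvd p" by (rule rdvd[OF pI])
    hence "degree p \<le> degree r" using ip False by (auto simp: irr_def)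
    moreover obtain s where ps: "p = r * s" using rp by (auto elim: dvdE)
    ultimately have s0: "s \<noteq> 0" and "degree s = 0" using p0 r0 by (auto simp: degree_mult_eq)
    then obtain c where sc: "s = [:c:]" by (metis degree_0_id)
    hence c0: "c \<noteq> 0" using s0 by simp
    have "r = smult (inverse c) p" using ps sc c0 by simp
    hence "p dvd r" by (simp add: dvd_smult_iff c0)
    hence "p dvd k" using rdvd[OF kI] by (rule dvd_trans)
    thus ?thesis by simp
  qed
qed

lemma exists_irr_factor:
  fixes m :: "'a::field poly"
  assumes "degree m \<ge> 1"
  obtains p h where "irr p" "lead_coeff p = 1" "m = p * h"
proof -
  define d where "d = (LEAST n. \<exists>r. r dvd m \<and> degree r \<ge> 1 \<and> degree r = n)"
  have ex: "\<exists>n r. r dvd m \<and> degree r \<ge> 1 \<and> degree r = n"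
    using assms by (intro exI[of _ "degree m"] exI[of _ m]) simp
  have "\<exists>r. r dvd m \<and> degree r \<ge> 1 \<and> degree r = d"
    unfolding d_def by (rule LeastI_ex[OF ex])
  then obtain r where rm: "r dvd m" and r1: "degree r \<ge> 1" and rd: "degree r = d" by blast
  have rmin: "x dvd m \<Longrightarrow> degree x \<ge> 1 \<Longrightarrow> degree r \<le> degree x" for x
    unfolding rd d_def by (rule Least_le) blast
  have r0: "r \<noteq> 0" using r1 by auto
  define p where "p = smult (inverse (lead_coeff r)) r"
  have lp: "lead_coeff p = 1" unfolding p_def using r0 by simp
  have dp: "degree p = degree r" unfolding p_def using r0 by simp
  have pm: "p dvd m" unfolding p_def using rm r0 by (simp add: smult_dvd_iff)
  have "irr p" unfolding irr_def
  proof (intro conjI allI impI)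
    show "degree p \<ge> 1" using dp r1 by simp
    fix x assume "x dvd p \<and> degree x \<ge> 1"
    hence "x dvd m" "degree x \<ge> 1" using pm dvd_trans by blast+
    thus "degree p \<le> degree x" using rmin dp by simp
  qed
  moreover obtain h where "m = p * h" using pm by (auto elim: dvdE)
  ultimately show ?thesis using that lp by blast
qed

lemma Gen_step:
  fixes p h :: "'k::{finite,field} poly"
  assumes pp: "irr p" and pu: "Lop p u = v" and G: "Gen h v" and hu: "Lop h u \<noteq> 0"
  shows "Gen (p * h) u"
  unfolding Gen_def
proof (intro conjI allI impI)
  have hv: "Lop h v = 0" using G by (simp add: Gen_def)
  show "Lop (p * h) u = 0"
    using hv pu by (simp add: Lop_mult Lop_comm[of p h])
  fix d assume du: "Lop d u = 0"
  have "Lop d v = Lop d (Lop p u)" using pu by simp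
  also have "\<dots> = Lop p (Lop d u)" by (rule Lop_comm)
  finally have "Lop d v = 0" using du by simp
  hence "h dvd d" using G by (simp add: Gen_def)
  then obtain k where dk: "d = h * k" by (auto elim: dvdE)
  show "p * h dvd d"
  proof (cases "p dvd k")
    case True
    thus ?thesis using dk by (simp add: mult.commute mult_dvd_mono)
  next
    case False
    then obtain a b where ab: "a * p + b * k = 1" using irr_bezout[OF pp, of k] by blast
    have "h = h * (a * p + b * k)" using ab by simp
    also have "\<dots> = a * (p * h) + b * d" using dk by (simp add: algebra_simps)
    finally have hd: "h = a * (p * h) + b * d" .
    have "Lop h u = Lop (a * (p * h) + b * d) u" using hd by (rule arg_cong)
    also have "\<dots> = Lop a (Lop (p * h) u) + Lop b (Lop d u)" by (simp only: Lop_add_g Lop_mult)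
    finally have "Lop h u = Lop a (Lop (p * h) u) + Lop b (Lop d u)" .
    also have "Lop (p * h) u = 0" using hv pu by (simp add: Lop_mult Lop_comm[of p h])
    finally have "Lop h u = 0" using du by simp
    thus ?thesis using hu by simp
  qed
qed

theorem exists_Gen:
  fixes m :: "'k::{finite,field} poly"
  assumes "lead_coeff m = 1" "coeff m 0 \<noteq> 0"
  shows "\<exists>v. Gen m v"
  using assms
proof (induction "degree m" arbitrary: m rule: less_induct)
  case less
  show ?case
  proof (cases "degree m = 0")
    case True
    then obtain c where "m = [:c:]" by (metis degree_0_id)
    hence "m = 1" using less.prems(1) by simp
    hence "Gen m 0" by (simp add: Gen_def)
    thus ?thesis by blast
  next
    case False
    have m0: "m \<noteq> 0" using less.prems by auto
    obtain p h where pp: "irr p" and lp: "lead_coeff p = 1" and mh: "m = p * h"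
      using exists_irr_factor[of m] False by auto
    have p0: "p \<noteq> 0" and h0: "h \<noteq> 0" using m0 mh by auto
    have lh: "lead_coeff h = 1" using less.prems(1) mh lp by (simp add: lead_coeff_mult)
    have cp: "coeff p 0 \<noteq> 0" and ch: "coeff h 0 \<noteq> 0"
      using less.prems(2) mh by (auto simp: coeff_mult_0)
    have dp: "degree p \<ge> 1" using pp by (simp add: irr_def)
    have dm: "degree m = degree p + degree h" using mh p0 h0 by (simp add: degree_mult_eq)
    hence "degree h < degree m" using dp by simp
    then obtain v where Gv: "Gen h v" using less.hyps lh ch by blast
    obtain u0 where u0: "Lop p u0 = v" using Lop_surj[OF dp] by blast
    obtain z0 where z0: "z0 \<noteq> 0" "Lop p z0 = 0" using Lop_nonzero_root[OF dp cp] by blast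
    have pu1: "Lop p (u0 + z0) = v" using u0 z0 by (simp add: Lop_add_x)
    show ?thesis
    proof (cases "Lop h u0 \<noteq> 0")
      case True
      thus ?thesis using Gen_step[OF pp u0 Gv] mh by blast
    next
      case F1: False
      show ?thesis
      proof (cases "Lop h (u0 + z0) \<noteq> 0")
        case True
        thus ?thesis using Gen_step[OF pp pu1 Gv] mh by blast
      next
        case False
        hence hz: "Lop h z0 = 0" using F1 by (simp add: Lop_add_x)
        show ?thesis
        proof (cases "p dvd h")
          case True
          then obtain h' where hh: "h = p * h'" by (auto elim: dvdE)
          have "Lop h' v = Lop h u0" using u0 hh by (simp add: Lop_mult mult.commute)
          hence "Lop h' v = 0" using F1 by simp
          hence "h dvd h'" using Gv by (simp add: Gen_def)
          moreover have h'0: "h' \<noteq> 0" using hh h0 by auto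
          ultimately have "degree h \<le> degree h'" by (rule dvd_imp_degree_le)
          moreover have "degree h = degree p + degree h'" using hh p0 h'0 by (simp add: degree_mult_eq)
          ultimately show ?thesis using dp by simp
        next
          case False
          then obtain a b where ab: "a * p + b * h = 1" using irr_bezout[OF pp, of h] by blast
          have "z0 = Lop (a * p + b * h) z0" using ab by simp
          also have "\<dots> = 0" using z0(2) hz by (simp add: Lop_add_g Lop_mult)
          finally show ?thesis using z0(1) by simp
        qed
      qed
    qed
  qed
qed

definition span_map :: "nat \<Rightarrow> 'k::{finite,field} ac \<Rightarrow> (nat \<Rightarrow> 'k) \<Rightarrow> 'k ac" where
  "span_map n v c = (\<Sum>i<n. emb_const (c i) * v ^ (CARD('k) ^ i))"

lemma Lop_span_map:
  fixes v :: "'k::{finite,field} ac"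
  shows "Lop (\<Sum>i<n. monom (c i) i) v = span_map n v c"
  unfolding span_map_def by (simp add: Lop_sum_g Lop_monom)

lemma degree_sum_monom_less:
  fixes c :: "nat \<Rightarrow> 'a::comm_ring_1"
  assumes "n > 0"
  shows "degree (\<Sum>i<n. monom (c i) i) < n"
proof -
  have "degree (\<Sum>i<n. monom (c i) i) \<le> n - 1"
  proof (rule degree_le, intro allI impI)
    fix k assume "n - 1 < k"
    thus "coeff (\<Sum>i<n. monom (c i) i) k = 0" using assms by (auto simp: coeff_sum coeff_monom)
  qed
  thus ?thesis using assms by linarith
qed

lemma coeff_sum_monom_lt:
  fixes c :: "nat \<Rightarrow> 'a::comm_ring_1"
  assumes "j < n"
  shows "coeff (\<Sum>i<n. monom (c i) i) j = c j"
proof -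
  have "coeff (\<Sum>i<n. monom (c i) i) j = (\<Sum>i<n. if i = j then c i else 0)"
    unfolding coeff_sum by (intro sum.cong refl) (auto simp: coeff_monom)
  thus ?thesis using assms by simp
qed

theorem Gen_span:
  fixes m :: "'k::{finite,field} poly"
  assumes G: "Gen m v" and m0: "m \<noteq> 0"
  shows "{x. Lop m x = 0} = span_map (degree m) v ` ({..<degree m} \<rightarrow>\<^sub>E UNIV)"
    and "card {x. Lop m x = 0} = CARD('k) ^ degree m"
proof -
  define n where "n = degree m"
  define D where "D = ({..<n} \<rightarrow>\<^sub>E (UNIV :: 'k set))"
  have inj: "inj_on (span_map n v) D"
  proof (rule inj_onI)
    fix c c' assume c: "c \<in> D" and c': "c' \<in> D" and eq: "span_map n v c = span_map n v c'"
    define g where "g = (\<Sum>i<n. monom (c i - c' i) i)"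
    have "Lop g v = span_map n v c - span_map n v c'"
      unfolding g_def Lop_span_map span_map_def by (simp add: sum_subtractf algebra_simps)
    hence "Lop g v = 0" using eq by simp
    hence "m dvd g" using G by (simp add: Gen_def)
    have "g = 0"
    proof (rule ccontr)
      assume g0: "g \<noteq> 0"
      hence "n > 0" unfolding g_def by (cases n) auto
      hence "degree g < n" unfolding g_def by (rule degree_sum_monom_less)
      moreover have "degree m \<le> degree g" using \<open>m dvd g\<close> g0 by (rule dvd_imp_degree_le)
      ultimately show False unfolding n_def by simp
    qed
    show "c = c'"
    proof (rule ext)
      fix j show "c j = c' j"
      proof (cases "j < n")
        case True
        have "coeff g j = c j - c' j" unfolding g_def by (rule coeff_sum_monom_lt[OF True])
        thus ?thesis using \<open>g = 0\<close> by simp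
      next
        case False
        thus ?thesis using c c' unfolding D_def by (auto simp: PiE_def extensional_def)
      qed
    qed
  qed
  have sub: "span_map n v ` D \<subseteq> {x. Lop m x = 0}"
  proof
    fix x assume "x \<in> span_map n v ` D"
    then obtain c where x: "x = span_map n v c" by auto
    have "Lop m (v ^ (CARD('k) ^ i)) = 0" for i
    proof -
      have "Lop m (v ^ (CARD('k) ^ i)) = Lop m (Lop (monom 1 i) v)" by (simp add: Lop_monom1)
      also have "\<dots> = Lop (monom 1 i) (Lop m v)" by (rule Lop_comm)
      also have "Lop m v = 0" using G by (simp add: Gen_def)
      finally show ?thesis by simp
    qed
    thus "x \<in> {x. Lop m x = 0}" unfolding x span_map_def by (simp add: Lop_sum_x Lop_scal_x)
  qed
  have cD: "card D = CARD('k) ^ n" unfolding D_def by (simp add: card_PiE)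
  have cimg: "card (span_map n v ` D) = CARD('k) ^ n" using card_image[OF inj] cD by simp
  have fin: "finite {x. Lop m x = 0}" by (rule Lop_roots_finite[OF m0])
  have cr: "card {x. Lop m x = 0} \<le> CARD('k) ^ n" unfolding n_def by (rule Lop_roots_card[OF m0])
  have eq: "span_map n v ` D = {x. Lop m x = 0}"
    by (rule card_subset_eq[OF fin sub]) (use cimg cr card_mono[OF fin sub] in simp)
  thus "{x. Lop m x = 0} = span_map (degree m) v ` ({..<degree m} \<rightarrow>\<^sub>E UNIV)"
    unfolding D_def n_def by simp
  show "card {x. Lop m x = 0} = CARD('k) ^ degree m" using eq cimg unfolding n_def by simp
qed


lemma fps_low_zero_dvd:
  fixes f :: "'a::comm_ring_1 fps"
  assumes "\<And>i. i < k \<Longrightarrow> f $ i = 0"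
  shows "f = fps_X ^ k * fps_shift k f"
  by (rule fps_ext) (simp add: fps_X_power_mult_nth assms)

lemma fps_Xpow_nth_low:
  fixes w :: "'a::comm_ring_1 fps"
  shows "i < k \<Longrightarrow> (fps_X ^ k * w) $ i = 0"
  by (simp add: fps_X_power_mult_nth)

theorem hensel_abstract:
  fixes \<Psi> N :: "'a::field fps \<Rightarrow> 'a fps"
  assumes add: "\<And>x y. \<Psi> (x - y) = \<Psi> x - \<Psi> y"
    and split: "\<And>x. \<Psi> x = fps_const \<beta> * x + N x"
    and b0: "\<beta> \<noteq> 0"
    and Ncontr: "\<And>j w. \<exists>w'. N (fps_X ^ (Suc j) * w) = fps_X ^ (Suc (Suc j)) * w'"
    and c0: "\<Psi> (fps_const c) $ 0 = 0"
  shows "\<exists>x. \<Psi> x = 0 \<and> x $ 0 = c"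
proof -
  define T where "T = (\<lambda>x. x - fps_const (inverse \<beta>) * \<Psi> x)"
  have Tdiff: "T x1 - T x2 = - (fps_const (inverse \<beta>) * N (x1 - x2))" for x1 x2
  proof -
    have "T x1 - T x2 = (x1 - x2) - fps_const (inverse \<beta>) * \<Psi> (x1 - x2)"
      unfolding T_def add by (simp add: algebra_simps)
    also have "\<dots> = (x1 - x2) - fps_const (inverse \<beta>) * (fps_const \<beta> * (x1 - x2)) -
                    fps_const (inverse \<beta>) * N (x1 - x2)"
      by (simp add: split algebra_simps)
    also have "fps_const (inverse \<beta>) * (fps_const \<beta> * (x1 - x2)) = x1 - x2"
      using b0 by (simp add: mult.assoc[symmetric] fps_const_mult[symmetric])
    finally show ?thesis by simp
  qed
  have Tcontr: "\<exists>w'. T x1 - T x2 = fps_X ^ Suc (Suc j) * w'" if "x1 - x2 = fps_X ^ Suc j * w" for x1 x2 j w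
  proof -
    obtain w' where "N (fps_X ^ (Suc j) * w) = fps_X ^ (Suc (Suc j)) * w'" using Ncontr by blast
    hence "T x1 - T x2 = fps_X ^ Suc (Suc j) * (- (fps_const (inverse \<beta>) * w'))"
      using Tdiff[of x1 x2] that by (simp add: algebra_simps)
    thus ?thesis by blast
  qed
  define xs where "xs = (\<lambda>j. (T ^^ j) (fps_const c))"
  have xs_Suc: "xs (Suc j) = T (xs j)" for j unfolding xs_def by simp
  have D: "\<exists>w. xs (Suc j) - xs j = fps_X ^ Suc j * w" for j
  proof (induction j)
    case 0
    have "xs (Suc 0) - xs 0 = - (fps_const (inverse \<beta>) * \<Psi> (fps_const c))"
      unfolding xs_def T_def by simp
    also have "\<Psi> (fps_const c) = fps_X ^ 1 * fps_shift 1 (\<Psi> (fps_const c))"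
      by (rule fps_low_zero_dvd) (use c0 in auto)
    finally have "xs (Suc 0) - xs 0 = fps_X ^ Suc 0 * (- (fps_const (inverse \<beta>) * fps_shift 1 (\<Psi> (fps_const c))))"
      by (simp add: algebra_simps)
    thus ?case by blast
  next
    case (Suc j)
    then obtain w where "xs (Suc j) - xs j = fps_X ^ Suc j * w" by blast
    from Tcontr[OF this] obtain w' where "T (xs (Suc j)) - T (xs j) = fps_X ^ Suc (Suc j) * w'" by blast
    thus ?case by (simp add: xs_Suc)
  qed
  have E: "\<exists>w. xs k - xs j = fps_X ^ Suc j * w" if "j \<le> k" for j k
    using that
  proof (induction k)
    case 0 thus ?case by (intro exI[of _ 0]) simp
  next
    case (Suc k)
    show ?case
    proof (cases "j = Suc k")
      case True thus ?thesis by (intro exI[of _ 0]) simp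
    next
      case False
      hence "j \<le> k" using Suc.prems by simp
      then obtain w2 where w2: "xs k - xs j = fps_X ^ Suc j * w2" using Suc.IH by blast
      obtain w1 where w1: "xs (Suc k) - xs k = fps_X ^ Suc k * w1" using D by blast
      have "fps_X ^ Suc k = fps_X ^ Suc j * (fps_X ^ (k - j) :: 'a fps)"
        using \<open>j \<le> k\<close> by (simp add: power_add[symmetric])
      hence "xs (Suc k) - xs j = fps_X ^ Suc j * (fps_X ^ (k - j) * w1 + w2)"
        using w1 w2 by (simp add: algebra_simps)
      thus ?thesis by blast
    qed
  qed
  define x where "x = Abs_fps (\<lambda>k. xs k $ k)"
  have xk: "x $ i = xs k $ i" if ik: "i \<le> k" for i k
  proof -
    obtain w where eq: "xs k - xs i = fps_X ^ Suc i * w" using E[OF ik] by blast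
    have "(xs k - xs i) $ i = (fps_X ^ Suc i * w) $ i" by (simp only: eq)
    also have "\<dots> = 0" by (rule fps_Xpow_nth_low) simp
    finally have "(xs k - xs i) $ i = 0" .
    thus ?thesis unfolding x_def by simp
  qed
  have Tx: "T x = x"
  proof (rule fps_ext)
    fix k
    have "x - xs k = fps_X ^ Suc k * fps_shift (Suc k) (x - xs k)"
      by (rule fps_low_zero_dvd) (simp add: xk)
    from Tcontr[OF this] obtain w' where eq: "T x - T (xs k) = fps_X ^ Suc (Suc k) * w'" by blast
    have "(T x - T (xs k)) $ k = (fps_X ^ Suc (Suc k) * w') $ k" by (simp only: eq)
    also have "\<dots> = 0" by (rule fps_Xpow_nth_low) simp
    finally have "(T x - T (xs k)) $ k = 0" .
    hence "T x $ k = T (xs k) $ k" by simp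
    also have "\<dots> = xs (Suc k) $ k" by (simp add: xs_Suc)
    also have "\<dots> = x $ k" by (rule xk[symmetric]) simp
    finally show "T x $ k = x $ k" .
  qed
  hence "fps_const (inverse \<beta>) * \<Psi> x = 0" unfolding T_def by simp
  hence "\<Psi> x = 0" using b0 by simp
  moreover have "x $ 0 = c" using xk[of 0 0] unfolding xs_def by simp
  ultimately show ?thesis by blast
qed

definition Pfps :: "nat \<Rightarrow> (nat \<Rightarrow> 'k::{finite,field} ac fps) \<Rightarrow> 'k ac fps \<Rightarrow> 'k ac fps" where
  "Pfps n B x = x ^ (CARD('k) ^ n) + (\<Sum>i<n. B i * x ^ (CARD('k) ^ i))"

lemma CHAR_ac_fps: "CHAR('k::{finite,field} ac fps) = CHAR('k)"
  by (simp add: CHAR_fract)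

lemma frob_fps_add:
  fixes x y :: "'k::{finite,field} ac fps"
  shows "(x + y) ^ (CARD('k) ^ i) = x ^ (CARD('k) ^ i) + y ^ (CARD('k) ^ i)"
  by (rule frob_add_gen) (rule CHAR_ac_fps)

lemma frob_fps_diff:
  fixes x y :: "'k::{finite,field} ac fps"
  shows "(x - y) ^ (CARD('k) ^ i) = x ^ (CARD('k) ^ i) - y ^ (CARD('k) ^ i)"
  using frob_fps_add[of "x - y" y i] by (simp add: eq_diff_eq)

lemma Pfps_diff: "Pfps n B (x - y) = Pfps n B x - Pfps n B y"
  unfolding Pfps_def by (simp add: frob_fps_diff algebra_simps sum_subtractf)

lemma Pfps_nth0:
  fixes B :: "nat \<Rightarrow> 'k::{finite,field} ac fps"
  shows "Pfps n B (fps_const c) $ 0 = c ^ (CARD('k) ^ n) + (\<Sum>i<n. (B i $ 0) * c ^ (CARD('k) ^ i))"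
  unfolding Pfps_def by (simp add: fps_sum_nth fps_nth_power_0)

lemma Xpow_power_contr:
  fixes w :: "'a::comm_ring_1 fps"
  assumes "Q \<ge> 2"
  shows "\<exists>w'. (fps_X ^ Suc j * w) ^ Q = fps_X ^ Suc (Suc j) * w'"
proof -
  have "(Suc j) * Q \<ge> Suc (Suc j)" using assms by (cases Q) auto
  then obtain r where r: "(Suc j) * Q = Suc (Suc j) + r" by (metis le_add_diff_inverse)
  have "(fps_X ^ Suc j * w) ^ Q = fps_X ^ ((Suc j) * Q) * w ^ Q"
    by (simp only: power_mult_distrib power_mult)
  also have "\<dots> = fps_X ^ Suc (Suc j) * (fps_X ^ r * w ^ Q)" by (simp only: r power_add mult.assoc)
  finally show ?thesis by blast
qed

theorem hensel_P:
  fixes B :: "nat \<Rightarrow> 'k::{finite,field} ac fps"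
  assumes b0: "n \<ge> 1 \<Longrightarrow> B 0 $ 0 \<noteq> 0"
    and c0: "c ^ (CARD('k) ^ n) + (\<Sum>i<n. (B i $ 0) * c ^ (CARD('k) ^ i)) = 0"
  shows "\<exists>x. Pfps n B x = 0 \<and> x $ 0 = c"
proof (cases "n = 0")
  case True
  have "Pfps n B (fps_const c) = fps_const c" using True by (simp add: Pfps_def)
  moreover have "c = 0" using c0 True by simp
  ultimately show ?thesis by (intro exI[of _ 0]) (simp add: Pfps_def True)
next
  case False
  hence n1: "n \<ge> 1" by simp
  define \<beta> where "\<beta> = B 0 $ 0"
  define C where "C = fps_shift 1 (B 0 - fps_const \<beta>)"
  have B0: "B 0 = fps_const \<beta> + fps_X * C"
  proof -
    have "B 0 - fps_const \<beta> = fps_X ^ 1 * C" unfolding C_def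
      by (rule fps_low_zero_dvd) (simp add: \<beta>_def)
    thus ?thesis by (simp add: algebra_simps)
  qed
  define N where "N = (\<lambda>x. x ^ (CARD('k) ^ n) + (\<Sum>i\<in>{1..<n}. B i * x ^ (CARD('k) ^ i)) + fps_X * C * x)"
  have split: "Pfps n B x = fps_const \<beta> * x + N x" for x
  proof -
    have "{..<n} = insert 0 {1..<n}" using n1 by auto
    hence "(\<Sum>i<n. B i * x ^ (CARD('k) ^ i)) = B 0 * x + (\<Sum>i\<in>{1..<n}. B i * x ^ (CARD('k) ^ i))"
      by simp
    thus ?thesis unfolding Pfps_def N_def B0 by (simp add: algebra_simps)
  qed
  have qi2: "CARD('k) ^ i \<ge> 2" if "i \<ge> 1" for i
  proof -
    have "CARD('k) ^ i \<ge> CARD('k) ^ 1" using that q_pow_le[where 'k='k] by blast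
    thus ?thesis using card_k_ge2[where 'k='k] by simp
  qed
  have Ncontr: "\<exists>w'. N (fps_X ^ (Suc j) * w) = fps_X ^ (Suc (Suc j)) * w'" for j w
  proof -
    define z where "z = fps_X ^ (Suc j) * w"
    obtain w1 where w1: "z ^ (CARD('k) ^ n) = fps_X ^ Suc (Suc j) * w1"
      using Xpow_power_contr[OF qi2[OF n1]] unfolding z_def by blast
    have "\<forall>i\<in>{1..<n}. \<exists>w'. z ^ (CARD('k) ^ i) = fps_X ^ Suc (Suc j) * w'"
      using Xpow_power_contr[OF qi2] unfolding z_def by auto
    then obtain W where W: "\<And>i. i \<in> {1..<n} \<Longrightarrow> z ^ (CARD('k) ^ i) = fps_X ^ Suc (Suc j) * W i"
      by metis
    have "(\<Sum>i\<in>{1..<n}. B i * z ^ (CARD('k) ^ i)) = (\<Sum>i\<in>{1..<n}. fps_X ^ Suc (Suc j) * (B i * W i))"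
      by (intro sum.cong refl) (simp add: W mult_ac)
    also have "\<dots> = fps_X ^ Suc (Suc j) * (\<Sum>i\<in>{1..<n}. B i * W i)" by (simp add: sum_distrib_left)
    finally have s: "(\<Sum>i\<in>{1..<n}. B i * z ^ (CARD('k) ^ i)) = fps_X ^ Suc (Suc j) * (\<Sum>i\<in>{1..<n}. B i * W i)" .
    have "fps_X * C * z = fps_X ^ Suc (Suc j) * (C * w)" unfolding z_def by (simp add: mult_ac)
    hence "N z = fps_X ^ Suc (Suc j) * (w1 + (\<Sum>i\<in>{1..<n}. B i * W i) + C * w)"
      unfolding N_def using w1 s by (simp add: algebra_simps)
    thus ?thesis unfolding z_def by blast
  qed
  have b0': "\<beta> \<noteq> 0" using b0 n1 by (simp add: \<beta>_def)
  have c0': "Pfps n B (fps_const c) $ 0 = 0" using c0 by (simp add: Pfps_nth0)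
  show ?thesis by (rule hensel_abstract[of "Pfps n B" \<beta> N c, OF Pfps_diff split b0' Ncontr c0'])
qed



lemma map_poly_add_hom:
  assumes "f 0 = 0" "\<And>x y. f (x + y) = f x + f y"
  shows "map_poly f (p + q) = map_poly f p + map_poly f q"
  by (rule poly_eqI) (simp add: coeff_map_poly assms)

lemma map_poly_mult_emb:
  "map_poly emb_const (p * q) = map_poly emb_const p * map_poly emb_const (q :: 'k::field poly)"
  by (rule poly_eqI) (simp add: coeff_map_poly coeff_mult emb_const_sum)

section \<open>Specialisation t = lam + s\<close>

definition evp :: "'k::field \<Rightarrow> 'k poly \<Rightarrow> 'k ac fps" where
  "evp lam p = fps_of_poly (map_poly emb_const (pcompose p [:lam, 1:]))"

definition ev :: "'k::field \<Rightarrow> 'k poly \<Rightarrow> 'k ac fls" where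
  "ev lam p = fps_to_fls (evp lam p)"

lemma evp_add: "evp lam (p + q) = evp lam p + evp lam q"
  unfolding evp_def by (simp add: pcompose_add map_poly_add_hom fps_of_poly_add)
lemma evp_mult: "evp lam (p * q) = evp lam p * evp lam q"
  unfolding evp_def by (simp add: pcompose_mult map_poly_mult_emb fps_of_poly_mult)
lemma evp_1 [simp]: "evp lam 1 = 1"
  unfolding evp_def by (simp add: pcompose_1)
lemma evp_0 [simp]: "evp lam 0 = 0"
  unfolding evp_def by simp
lemma evp_nth: "evp lam p $ k = emb_const (coeff (pcompose p [:lam, 1:]) k)"
  unfolding evp_def by (simp add: coeff_map_poly)
lemma evp_nth0: "evp lam p $ 0 = emb_const (poly p lam)"
  by (simp add: evp_nth poly_0_coeff_0[symmetric] poly_pcompose)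
lemma evp_eq_0_iff: "evp lam p = 0 \<longleftrightarrow> p = 0"
proof
  assume "evp lam p = 0"
  hence "map_poly emb_const (pcompose p [:lam, 1:]) = 0"
    unfolding evp_def using fps_of_poly_eq_iff[of _ 0] by simp
  hence "pcompose p [:lam, 1:] = 0" by (simp add: map_poly_eq_0_iff)
  thus "p = 0" by (rule pcompose_eq_0) simp
qed simp

lemma ev_add: "ev lam (p + q) = ev lam p + ev lam q"
  unfolding ev_def by (simp add: evp_add)
lemma ev_mult: "ev lam (p * q) = ev lam p * ev lam q"
  unfolding ev_def by (simp add: evp_mult fls_times_fps_to_fls)
lemma ev_1 [simp]: "ev lam 1 = 1"
  unfolding ev_def by simp
lemma ev_0 [simp]: "ev lam 0 = 0"
  unfolding ev_def by simp
lemma ev_eq_0_iff: "ev lam p = 0 \<longleftrightarrow> p = 0"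
  unfolding ev_def by (simp add: evp_eq_0_iff)
lemma ev_uminus: "ev lam (- p) = - ev lam p"
  using ev_add[of lam p "-p"] by (simp add: eq_neg_iff_add_eq_0 add.commute)

definition iota :: "'k::field \<Rightarrow> 'k ratfun \<Rightarrow> 'k ac fls" where
  "iota lam r = (let ab = (SOME ab. r = Fract (fst ab) (snd ab) \<and> snd ab \<noteq> 0)
                 in ev lam (fst ab) / ev lam (snd ab))"

lemma iota_Fract:
  assumes b0: "b \<noteq> 0"
  shows "iota lam (Fract a b) = ev lam a / ev lam b"
proof -
  define ab where "ab = (SOME ab. Fract a b = Fract (fst ab) (snd ab) \<and> snd ab \<noteq> 0)"
  have "\<exists>ab. Fract a b = Fract (fst ab) (snd ab) \<and> snd ab \<noteq> 0"
    using b0 by (intro exI[of _ "(a, b)"]) simp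
  hence ab: "Fract a b = Fract (fst ab) (snd ab)" "snd ab \<noteq> 0"
    unfolding ab_def by (metis (mono_tags, lifting) someI_ex)+
  hence "a * snd ab = fst ab * b" using b0 by (simp add: eq_fract)
  hence "ev lam a * ev lam (snd ab) = ev lam (fst ab) * ev lam b" by (simp flip: ev_mult)
  moreover have "ev lam b \<noteq> 0" "ev lam (snd ab) \<noteq> 0" using b0 ab(2) by (simp_all add: ev_eq_0_iff)
  ultimately have "ev lam (fst ab) / ev lam (snd ab) = ev lam a / ev lam b"
    by (simp add: divide_eq_eq eq_divide_eq field_simps)
  thus ?thesis unfolding iota_def ab_def[symmetric] by (simp add: Let_def)
qed

lemma iota_Fract1: "iota lam (Fract a 1) = ev lam a"
  by (simp add: iota_Fract)

lemma iota_add: "iota lam (x + y) = iota lam x + iota lam y"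
proof -
  obtain a b where x: "x = Fract a b" "b \<noteq> 0" by (cases x)
  obtain c d where y: "y = Fract c d" "d \<noteq> 0" by (cases y)
  have "ev lam b \<noteq> 0" "ev lam d \<noteq> 0" using x y by (simp_all add: ev_eq_0_iff)
  thus ?thesis using x y by (simp add: iota_Fract ev_add ev_mult field_simps)
qed

lemma iota_mult: "iota lam (x * y) = iota lam x * iota lam y"
proof -
  obtain a b where x: "x = Fract a b" "b \<noteq> 0" by (cases x)
  obtain c d where y: "y = Fract c d" "d \<noteq> 0" by (cases y)
  have "ev lam b \<noteq> 0" "ev lam d \<noteq> 0" using x y by (simp_all add: ev_eq_0_iff)
  thus ?thesis using x y by (simp add: iota_Fract ev_add ev_mult field_simps)
qed

lemma iota_1 [simp]: "iota lam 1 = 1"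
  by (simp add: One_fract_def iota_Fract)
lemma iota_0 [simp]: "iota lam 0 = 0"
  by (simp add: Zero_fract_def iota_Fract)

section \<open>Frobenius on Laurent series\<close>

definition frobL :: "'k::{finite,field} itself \<Rightarrow> 'k ac fls \<Rightarrow> 'k ac fls" where
  "frobL _ f = Abs_fls (\<lambda>k. (f $$ k) ^ CARD('k))"

lemma frobL_nth: "frobL TYPE('k::{finite,field}) f $$ k = (f $$ k) ^ CARD('k)"
proof -
  have "\<forall>\<^sub>\<infinity>n. (f $$ (- int n)) ^ CARD('k) = 0"
    by (rule eventually_mono[OF MOST_fls_neg_nth_eq_0]) (use q_pos[where 'k='k and i=1] in simp)
  thus ?thesis unfolding frobL_def by simp
qed

lemma frob1_add: "(x + y :: 'k::{finite,field} ac) ^ CARD('k) = x ^ CARD('k) + y ^ CARD('k)"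
  using frob_ac_add[of x y 1] by simp

lemma frob1_sum: "(sum f A :: 'k::{finite,field} ac) ^ CARD('k) = (\<Sum>x\<in>A. f x ^ CARD('k))"
  using frob_ac_sum[of f A 1] by simp

lemma frob1_eq_iff: "(x :: 'k::{finite,field} ac) ^ CARD('k) = y ^ CARD('k) \<longleftrightarrow> x = y"
proof
  assume "x ^ CARD('k) = y ^ CARD('k)"
  hence "(x - y) ^ (CARD('k) ^ 1) = 0" using frob_ac_diff[of x y 1] by simp
  thus "x = y" by simp
qed simp

lemma frob1_eq_0_iff: "(x :: 'k::{finite,field} ac) ^ CARD('k) = 0 \<longleftrightarrow> x = 0"
  using q_pos[where 'k='k and i=1] by simp

lemma frobL_add: "frobL TYPE('k::{finite,field}) (f + g) = frobL TYPE('k) f + frobL TYPE('k) g"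
  by (rule fls_eqI) (simp add: frobL_nth frob1_add)

lemma frobL_0 [simp]: "frobL TYPE('k::{finite,field}) 0 = 0"
  by (rule fls_eqI) (simp add: frobL_nth frob1_eq_0_iff)

lemma frobL_1 [simp]: "frobL TYPE('k::{finite,field}) 1 = 1"
  by (rule fls_eqI) (simp add: frobL_nth frob1_eq_0_iff)

lemma frobL_eq_0_iff: "frobL TYPE('k::{finite,field}) f = 0 \<longleftrightarrow> f = 0"
  by (simp add: fls_eq_iff frobL_nth frob1_eq_0_iff)

lemma frobL_subdegree: "fls_subdegree (frobL TYPE('k::{finite,field}) f) = fls_subdegree f"
  unfolding fls_subdegree_def by (simp add: frobL_eq_0_iff frobL_nth frob1_eq_0_iff)

lemma frobL_mult: "frobL TYPE('k::{finite,field}) (f * g) = frobL TYPE('k) f * frobL TYPE('k) g"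
proof (rule fls_eqI)
  fix n
  show "frobL TYPE('k) (f * g) $$ n = (frobL TYPE('k) f * frobL TYPE('k) g) $$ n"
    by (simp add: frobL_nth fls_times_nth(2) frobL_subdegree frob1_sum power_mult_distrib)
qed

lemma frobL_inj: "frobL TYPE('k::{finite,field}) f = frobL TYPE('k) g \<longleftrightarrow> f = g"
  by (simp add: fls_eq_iff frobL_nth frob1_eq_iff)

lemma frobL_inverse: "frobL TYPE('k::{finite,field}) (inverse f) = inverse (frobL TYPE('k) f)"
proof (cases "f = 0")
  case False
  have "frobL TYPE('k) f * frobL TYPE('k) (inverse f) = 1"
    using False by (simp flip: frobL_mult)
  thus ?thesis by (simp add: inverse_unique)
qed (simp add: fls_inverse_zero)

lemma frobL_divide: "frobL TYPE('k::{finite,field}) (f / g) = frobL TYPE('k) f / frobL TYPE('k) g"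
  by (simp add: divide_inverse frobL_mult frobL_inverse)

lemma frobL_power: "frobL TYPE('k::{finite,field}) (f ^ n) = frobL TYPE('k) f ^ n"
  by (induction n) (simp_all add: frobL_mult)

lemma frobL_uminus: "frobL TYPE('k::{finite,field}) (- f) = - frobL TYPE('k) f"
  using frobL_add[of f "-f"] by (simp add: eq_neg_iff_add_eq_0 add.commute)

lemma frobL_sum: "frobL TYPE('k::{finite,field}) (sum f A) = (\<Sum>a\<in>A. frobL TYPE('k) (f a))"
  by (induction A rule: infinite_finite_induct) (simp_all add: frobL_add)

lemma frobL_ev: "frobL TYPE('k::{finite,field}) (ev lam p) = ev lam p"
  by (rule fls_eqI) (simp add: frobL_nth ev_def evp_nth flip: emb_const_power add: pow_card_same)

lemma frobL_iota: "frobL TYPE('k::{finite,field}) (iota lam r) = iota lam r"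
proof -
  obtain a b where r: "r = Fract a b" "b \<noteq> 0" by (cases r)
  thus ?thesis by (simp add: iota_Fract frobL_divide frobL_ev)
qed

lemma frobL_nth0: "frobL TYPE('k::{finite,field}) f $$ 0 = (f $$ 0) ^ CARD('k)"
  by (simp add: frobL_nth)

lemma frobL_const: "frobL TYPE('k::{finite,field}) (fls_const c) = fls_const (c ^ CARD('k))"
  by (rule fls_eqI) (simp add: frobL_nth frob1_eq_0_iff)



definition Pgen :: "'k::{finite,field} itself \<Rightarrow> nat \<Rightarrow> (nat \<Rightarrow> 'b::comm_ring_1) \<Rightarrow> 'b poly" where
  "Pgen _ n c = monom 1 (CARD('k) ^ n) + (\<Sum>i<n. monom (c i) (CARD('k) ^ i))"

lemma poly_Pgen:
  "poly (Pgen TYPE('k::{finite,field}) n c) y = y ^ (CARD('k) ^ n) + (\<Sum>i<n. c i * y ^ (CARD('k) ^ i))"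
  by (simp add: Pgen_def poly_monom poly_sum)

lemma coeff_Pgen_top: "coeff (Pgen TYPE('k::{finite,field}) n c) (CARD('k) ^ n) = 1"
proof -
  have "(\<Sum>i<n. coeff (monom (c i) (CARD('k) ^ i)) (CARD('k) ^ n)) = 0"
    by (intro sum.neutral) (auto simp: coeff_monom q_pow_inj)
  thus ?thesis by (simp add: Pgen_def coeff_sum)
qed

lemma degree_Pgen: "degree (Pgen TYPE('k::{finite,field}) n (c :: nat \<Rightarrow> 'b::comm_ring_1)) = CARD('k) ^ n"
proof (rule antisym)
  show "degree (Pgen TYPE('k) n c) \<le> CARD('k) ^ n"
  proof (rule degree_le, intro allI impI)
    fix k assume k: "CARD('k) ^ n < k"
    have "(\<Sum>i<n. coeff (monom (c i) (CARD('k) ^ i)) k) = 0"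
    proof (intro sum.neutral ballI)
      fix i assume "i \<in> {..<n}"
      hence "CARD('k) ^ i \<le> CARD('k) ^ n" by (simp add: q_pow_le)
      thus "coeff (monom (c i) (CARD('k) ^ i)) k = 0" using k by (auto simp: coeff_monom)
    qed
    thus "coeff (Pgen TYPE('k) n c) k = 0" using k by (simp add: Pgen_def coeff_sum coeff_monom)
  qed
  show "CARD('k) ^ n \<le> degree (Pgen TYPE('k) n c)"
    by (rule le_degree) (simp add: coeff_Pgen_top)
qed

lemma Pgen_nz: "Pgen TYPE('k::{finite,field}) n (c :: nat \<Rightarrow> 'b::comm_ring_1) \<noteq> 0"
proof
  assume "Pgen TYPE('k) n c = 0"
  hence "coeff (Pgen TYPE('k) n c) (CARD('k) ^ n) = 0" by simp
  thus False by (simp add: coeff_Pgen_top)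
qed

lemma map_poly_sum_hom:
  assumes "f 0 = 0" "\<And>x y. f (x + y) = f x + f y"
  shows "map_poly f (sum g A) = (\<Sum>i\<in>A. map_poly f (g i))"
  by (induction A rule: infinite_finite_induct) (simp_all add: map_poly_add_hom assms)

lemma map_poly_Pgen:
  assumes "f 0 = 0" "f 1 = 1" "\<And>x y. f (x + y) = f x + f y"
  shows "map_poly f (Pgen TYPE('k::{finite,field}) n c) = Pgen TYPE('k) n (\<lambda>i. f (c i))"
  unfolding Pgen_def
  by (simp add: map_poly_add_hom map_poly_sum_hom map_poly_monom assms)

section \<open>Counting roots of separable polynomials in an algebraically closed field\<close>

lemma card_roots_separable:
  fixes p :: "'a::alg_closed_field poly"
  assumes "p \<noteq> 0" and "\<And>x. poly p x = 0 \<Longrightarrow> poly (pderiv p) x \<noteq> 0"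
  shows "card {x. poly p x = 0} = degree p"
  using assms
proof (induction "degree p" arbitrary: p)
  case 0
  then obtain c where "p = [:c:]" by (metis degree_0_id)
  hence "{x. poly p x = 0} = {}" using 0 by auto
  thus ?case using 0 by simp
next
  case (Suc d)
  then obtain x where x: "poly p x = 0" using alg_closed_imp_poly_has_root[of p] by auto
  then obtain r where pr: "p = [:-x, 1:] * r" by (metis poly_eq_0_iff_dvd dvdE)
  have r0: "r \<noteq> 0" using Suc.prems pr by auto
  have "degree ([:-x, 1:] * r) = degree [:-x, 1:] + degree r"
    by (rule degree_mult_eq) (use r0 in auto)
  hence dr: "degree r = d" using Suc.hyps(2) pr by simp
  have d1: "pderiv [:-x, 1:] = 1" by (simp add: pderiv_pCons)
  have pd: "pderiv p = r + [:-x, 1:] * pderiv r"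
    by (simp only: pr pderiv_mult d1 mult_1_right add.commute)
  have rx: "poly r x \<noteq> 0"
  proof
    assume "poly r x = 0"
    hence "poly (pderiv p) x = 0" using pd by simp
    thus False using Suc.prems(2)[OF x] by simp
  qed
  have rsep: "poly (pderiv r) y \<noteq> 0" if "poly r y = 0" for y
  proof
    assume "poly (pderiv r) y = 0"
    hence "poly (pderiv p) y = 0" "poly p y = 0" using pd pr that by simp_all
    thus False using Suc.prems(2) by blast
  qed
  have "card {y. poly r y = 0} = d" using Suc.hyps(1)[of r] dr r0 rsep by blast
  moreover have "{y. poly p y = 0} = insert x {y. poly r y = 0}" using pr by auto
  moreover have "finite {y. poly r y = 0}" using poly_roots_finite[OF r0] .
  ultimately show ?case using rx Suc.hyps(2) by simp
qed

lemma of_nat_q_ac: "(of_nat (CARD('k::{finite,field}) ^ Suc i) :: 'k ac) = 0"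
proof -
  have "CHAR('k) dvd CARD('k) ^ Suc i" by (rule dvd_trans[OF CHAR_dvd_CARD]) simp
  hence "CHAR('k ac) dvd CARD('k) ^ Suc i" by (simp only: CHAR_ac)
  thus ?thesis by (simp only: of_nat_eq_0_iff_char_dvd)
qed

lemma of_nat_card_ac [simp]: "(of_nat CARD('k::{finite,field}) :: 'k ac) = 0"
  using of_nat_q_ac[where 'k='k and i=0] by simp

lemma pderiv_Pgen_ac:
  fixes c :: "nat \<Rightarrow> 'k::{finite,field} ac"
  shows "pderiv (Pgen TYPE('k) n c) = (if n = 0 then 1 else [:c 0:])"
proof -
  have t: "pderiv (monom (1::'k ac) (CARD('k) ^ n)) = (if n = 0 then 1 else 0)"
    by (cases n) (simp_all add: pderiv_monom of_nat_q_ac)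
  have s: "pderiv (\<Sum>i<n. monom (c i) (CARD('k) ^ i)) = (if n = 0 then 0 else [:c 0:])"
  proof (cases n)
    case (Suc m)
    have "pderiv (\<Sum>i<n. monom (c i) (CARD('k) ^ i)) = (\<Sum>i<n. pderiv (monom (c i) (CARD('k) ^ i)))"
      by (induction n) (simp_all add: pderiv_add)
    also have "\<dots> = (\<Sum>i<n. if i = 0 then [:c 0:] else 0)"
    proof (intro sum.cong refl)
      fix i show "pderiv (monom (c i) (CARD('k) ^ i)) = (if i = 0 then [:c 0:] else 0)"
        by (cases i) (simp_all add: pderiv_monom of_nat_q_ac monom_0)
    qed
    also have "\<dots> = [:c 0:]" using Suc by simp
    finally show ?thesis using Suc by simp
  qed simp
  show ?thesis unfolding Pgen_def pderiv_add t s by simp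
qed

lemma card_roots_Pgen_ac:
  fixes c :: "nat \<Rightarrow> 'k::{finite,field} ac"
  assumes "n \<ge> 1 \<Longrightarrow> c 0 \<noteq> 0"
  shows "card {x. poly (Pgen TYPE('k) n c) x = 0} = CARD('k) ^ n"
proof -
  have "card {x. poly (Pgen TYPE('k) n c) x = 0} = degree (Pgen TYPE('k) n c)"
    by (rule card_roots_separable[OF Pgen_nz]) (use assms in \<open>auto simp: pderiv_Pgen_ac\<close>)
  thus ?thesis by (simp add: degree_Pgen)
qed



definition mpol :: "nat \<Rightarrow> (nat \<Rightarrow> 'k::{finite,field} poly) \<Rightarrow> 'k \<Rightarrow> 'k poly" where
  "mpol n a lam = monom 1 n + (\<Sum>i<n. monom (poly (a i) lam) i)"

definition Vl :: "nat \<Rightarrow> (nat \<Rightarrow> 'k::{finite,field} poly) \<Rightarrow> 'k \<Rightarrow> 'k ac set" where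
  "Vl n a lam = {x. Lop (mpol n a lam) x = 0}"

definition PM :: "nat \<Rightarrow> (nat \<Rightarrow> 'k::{finite,field} poly) \<Rightarrow> 'k \<Rightarrow> 'k ac fls poly" where
  "PM n a lam = Pgen TYPE('k) n (\<lambda>i. ev lam (a i))"

definition RM :: "nat \<Rightarrow> (nat \<Rightarrow> 'k::{finite,field} poly) \<Rightarrow> 'k \<Rightarrow> 'k ac fls set" where
  "RM n a lam = {y. poly (PM n a lam) y = 0}"

definition Lf :: "nat \<Rightarrow> (nat \<Rightarrow> 'k::{finite,field} poly) \<Rightarrow> 'k \<Rightarrow> 'k ac \<Rightarrow> 'k ac fls" where
  "Lf n a lam c = fps_to_fls (SOME x. Pfps n (\<lambda>i. evp lam (a i)) x = 0 \<and> x $ 0 = c)"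

lemma coeff_mpol: "coeff (mpol n a lam) k = (if k = n then 1 else 0) + (if k < n then poly (a k) lam else 0)"
proof -
  have "(\<Sum>i<n. coeff (monom (poly (a i) lam) i) k) = (\<Sum>i<n. if i = k then poly (a i) lam else 0)"
    by (intro sum.cong refl) (auto simp: coeff_monom)
  thus ?thesis by (simp add: mpol_def coeff_sum coeff_monom)
qed

lemma degree_mpol: "degree (mpol n a lam) = n"
proof (rule antisym)
  show "degree (mpol n a lam) \<le> n" by (rule degree_le) (simp add: coeff_mpol)
  show "n \<le> degree (mpol n a lam)" by (rule le_degree) (simp add: coeff_mpol)
qed

lemma lead_mpol: "lead_coeff (mpol n a lam) = 1"
  by (simp add: degree_mpol coeff_mpol)

lemma mpol_nz: "mpol n a lam \<noteq> 0"
  using lead_mpol[of n a lam] by auto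

lemma coeff0_mpol:
  assumes "poly (a 0) lam \<noteq> 0" shows "coeff (mpol n a lam) 0 \<noteq> 0"
  using assms by (cases n) (simp_all add: coeff_mpol)

lemma Lop_mpol:
  fixes a :: "nat \<Rightarrow> 'k::{finite,field} poly"
  shows "Lop (mpol n a lam) x = x ^ (CARD('k) ^ n) + (\<Sum>i<n. emb_const (poly (a i) lam) * x ^ (CARD('k) ^ i))"
  by (simp add: mpol_def Lop_add_g Lop_sum_g Lop_monom Lop_monom1)

lemma exists_Gen_mpol:
  assumes "poly (a 0) lam \<noteq> 0" shows "\<exists>v. Gen (mpol n a lam) v"
  by (rule exists_Gen[OF lead_mpol coeff0_mpol[where a=a and lam=lam and n=n, OF assms]])

lemma card_Vl:
  fixes a :: "nat \<Rightarrow> 'k::{finite,field} poly"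
  assumes "poly (a 0) lam \<noteq> 0"
  shows "card (Vl n a lam) = CARD('k) ^ n"
proof -
  obtain v where "Gen (mpol n a lam) v" using exists_Gen_mpol[where a=a and lam=lam and n=n, OF assms] by blast
  from Gen_span(2)[OF this mpol_nz] show ?thesis by (simp add: Vl_def degree_mpol)
qed

lemma finite_Vl: "finite (Vl n a lam)"
  unfolding Vl_def by (rule Lop_roots_finite[OF mpol_nz])

lemma fps_to_fls_sum: "fps_to_fls (sum f A) = (\<Sum>x\<in>A. fps_to_fls (f x))"
  by (induction A rule: infinite_finite_induct) simp_all

lemma poly_PM_fps:
  fixes a :: "nat \<Rightarrow> 'k::{finite,field} poly"
  shows "poly (PM n a lam) (fps_to_fls x) = fps_to_fls (Pfps n (\<lambda>i. evp lam (a i)) x)"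
  by (simp add: PM_def poly_Pgen Pfps_def fps_to_fls_sum fls_times_fps_to_fls fps_to_fls_power ev_def)

lemma Lf_props:
  fixes a :: "nat \<Rightarrow> 'k::{finite,field} poly"
  assumes A0: "poly (a 0) lam \<noteq> 0" and c: "c \<in> Vl n a lam"
  shows "Lf n a lam c \<in> RM n a lam" "Lf n a lam c $$ 0 = c"
proof -
  define B where "B = (\<lambda>i. evp lam (a i))"
  have "\<exists>x. Pfps n B x = 0 \<and> x $ 0 = c"
  proof (rule hensel_P)
    show "B 0 $ 0 \<noteq> 0" if "n \<ge> 1" using A0 by (simp add: B_def evp_nth0)
    show "c ^ (CARD('k) ^ n) + (\<Sum>i<n. (B i $ 0) * c ^ (CARD('k) ^ i)) = 0"
      using c by (simp add: Vl_def Lop_mpol B_def evp_nth0)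
  qed
  hence x: "Pfps n B (SOME x. Pfps n B x = 0 \<and> x $ 0 = c) = 0 \<and> (SOME x. Pfps n B x = 0 \<and> x $ 0 = c) $ 0 = c"
    by (rule someI_ex)
  show "Lf n a lam c \<in> RM n a lam"
    using x unfolding Lf_def RM_def B_def by (simp add: poly_PM_fps)
  show "Lf n a lam c $$ 0 = c"
    using x unfolding Lf_def B_def by simp
qed

lemma RM_finite: "finite (RM n a lam)"
  unfolding RM_def PM_def by (rule poly_roots_finite[OF Pgen_nz])

lemma RM_card_le:
  fixes a :: "nat \<Rightarrow> 'k::{finite,field} poly"
  shows "card (RM n a lam) \<le> CARD('k) ^ n"
  unfolding RM_def PM_def using card_poly_roots_bound[OF Pgen_nz] by (simp add: degree_Pgen)

lemma RM_eq:
  fixes a :: "nat \<Rightarrow> 'k::{finite,field} poly"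
  assumes A0: "poly (a 0) lam \<noteq> 0"
  shows "RM n a lam = Lf n a lam ` Vl n a lam" and "card (RM n a lam) = CARD('k) ^ n"
proof -
  have inj: "inj_on (Lf n a lam) (Vl n a lam)"
    by (rule inj_onI) (metis Lf_props(2)[where a=a and lam=lam and n=n, OF A0])
  have sub: "Lf n a lam ` Vl n a lam \<subseteq> RM n a lam" using Lf_props(1)[where a=a and lam=lam and n=n, OF A0] by auto
  have ci: "card (Lf n a lam ` Vl n a lam) = CARD('k) ^ n"
    using card_image[OF inj] card_Vl[where a=a and lam=lam and n=n, OF A0] by simp
  show eq: "RM n a lam = Lf n a lam ` Vl n a lam"
    by (rule card_subset_eq[OF RM_finite sub, symmetric]) (use ci RM_card_le[of n a lam] card_mono[OF RM_finite sub] in simp)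
  show "card (RM n a lam) = CARD('k) ^ n" using eq ci by simp
qed

lemma RM_elem:
  fixes a :: "nat \<Rightarrow> 'k::{finite,field} poly"
  assumes A0: "poly (a 0) lam \<noteq> 0" and y: "y \<in> RM n a lam"
  shows "y $$ 0 \<in> Vl n a lam" "y = Lf n a lam (y $$ 0)"
proof -
  obtain c where c: "c \<in> Vl n a lam" "y = Lf n a lam c" using y RM_eq(1)[where a=a and lam=lam and n=n, OF A0] by auto
  thus "y $$ 0 \<in> Vl n a lam" "y = Lf n a lam (y $$ 0)" using Lf_props(2)[where a=a and lam=lam and n=n, OF A0 c(1)] by simp_all
qed

lemma CHAR_fls_ac: "CHAR('k::{finite,field} ac fls) = CHAR('k)"
  by (simp add: CHAR_fract)

lemma frob_fls_add:
  fixes x y :: "'k::{finite,field} ac fls"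
  shows "(x + y) ^ (CARD('k) ^ i) = x ^ (CARD('k) ^ i) + y ^ (CARD('k) ^ i)"
  by (rule frob_add_gen) (rule CHAR_fls_ac)

lemma poly_PM_add:
  fixes a :: "nat \<Rightarrow> 'k::{finite,field} poly"
  shows "poly (PM n a lam) (x + y) = poly (PM n a lam) x + poly (PM n a lam) y"
  by (simp add: PM_def poly_Pgen frob_fls_add algebra_simps sum.distrib)

lemma fls_const_emb_pow:
  fixes c :: "'k::{finite,field}"
  shows "fls_const (emb_const c) ^ (CARD('k) ^ i) = fls_const (emb_const c)"
  by (simp flip: fls_const_power)

lemma poly_PM_scal:
  fixes a :: "nat \<Rightarrow> 'k::{finite,field} poly"
  shows "poly (PM n a lam) (fls_const (emb_const c) * x) = fls_const (emb_const c) * poly (PM n a lam) x"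
  by (simp add: PM_def poly_Pgen power_mult_distrib fls_const_emb_pow algebra_simps sum_distrib_left)

lemma poly_PM_frobL:
  fixes a :: "nat \<Rightarrow> 'k::{finite,field} poly"
  shows "poly (PM n a lam) (frobL TYPE('k) x) = frobL TYPE('k) (poly (PM n a lam) x)"
  by (simp add: PM_def poly_Pgen frobL_add frobL_sum frobL_mult frobL_power frobL_ev)

lemma RM_add: "x \<in> RM n a lam \<Longrightarrow> y \<in> RM n a lam \<Longrightarrow> x + y \<in> RM n a lam"
  unfolding RM_def by (simp add: poly_PM_add)

lemma RM_scal: "x \<in> RM n a lam \<Longrightarrow> fls_const (emb_const c) * x \<in> RM n a lam"
  unfolding RM_def by (simp add: poly_PM_scal)

lemma RM_frobL: "x \<in> RM n a (lam::'k::{finite,field}) \<Longrightarrow> frobL TYPE('k) x \<in> RM n a lam"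
  unfolding RM_def by (simp add: poly_PM_frobL)


definition inS :: "'a::field set \<Rightarrow> 'a poly \<Rightarrow> bool" where
  "inS S g \<longleftrightarrow> (\<forall>i. coeff g i \<in> S)"

definition hom_on :: "'a::field set \<Rightarrow> ('a \<Rightarrow> 'b::field) \<Rightarrow> bool" where
  "hom_on S h \<longleftrightarrow> h 1 = 1 \<and> (\<forall>x\<in>S. \<forall>y\<in>S. h (x + y) = h x + h y \<and> h (x * y) = h x * h y)"

lemma subfieldD:
  assumes "is_subfield S"
  shows "0 \<in> S" "1 \<in> S" "x \<in> S \<Longrightarrow> y \<in> S \<Longrightarrow> x + y \<in> S" "x \<in> S \<Longrightarrow> y \<in> S \<Longrightarrow> x * y \<in> S"
    "x \<in> S \<Longrightarrow> - x \<in> S" "x \<in> S \<Longrightarrow> inverse x \<in> S"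
  using assms unfolding is_subfield_def by auto

lemma subfield_diff:
  assumes "is_subfield S" "x \<in> S" "y \<in> S" shows "x - y \<in> S"
proof -
  have "- y \<in> S" using subfieldD(5)[OF assms(1) assms(3)] .
  hence "x + - y \<in> S" using subfieldD(3)[OF assms(1) assms(2)] by blast
  thus ?thesis by simp
qed

lemma subfield_sum:
  assumes S: "is_subfield S"
  shows "(\<And>i. i \<in> I \<Longrightarrow> f i \<in> S) \<Longrightarrow> sum f I \<in> S"
proof (induction I rule: infinite_finite_induct)
  case (infinite A) thus ?case using subfieldD(1)[OF S] by simp
next
  case empty thus ?case using subfieldD(1)[OF S] by simp
next
  case (insert x F) thus ?case using subfieldD(3)[OF S] by simp
qed

lemma subfield_power: "is_subfield S \<Longrightarrow> x \<in> S \<Longrightarrow> x ^ k \<in> S"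
  by (induction k) (simp_all add: subfieldD(2,4))

lemma inS_add: "is_subfield S \<Longrightarrow> inS S g \<Longrightarrow> inS S h \<Longrightarrow> inS S (g + h)"
  unfolding inS_def by (simp add: subfieldD(3))
lemma inS_diff: "is_subfield S \<Longrightarrow> inS S g \<Longrightarrow> inS S h \<Longrightarrow> inS S (g - h)"
  unfolding inS_def by (simp add: subfield_diff)
lemma inS_mult: "is_subfield S \<Longrightarrow> inS S g \<Longrightarrow> inS S h \<Longrightarrow> inS S (g * h)"
  unfolding inS_def coeff_mult by (blast intro: subfield_sum subfieldD(4))
lemma inS_const: "is_subfield S \<Longrightarrow> c \<in> S \<Longrightarrow> inS S [:c:]"
  unfolding inS_def by (auto simp: coeff_pCons subfieldD(1) split: nat.split)
lemma inS_monom: "is_subfield S \<Longrightarrow> c \<in> S \<Longrightarrow> inS S (monom c k)"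
  unfolding inS_def by (auto simp: coeff_monom subfieldD(1))
lemma inS_smult: "is_subfield S \<Longrightarrow> c \<in> S \<Longrightarrow> inS S g \<Longrightarrow> inS S (smult c g)"
  unfolding inS_def by (simp add: subfieldD(4))
lemma inS_0: "is_subfield S \<Longrightarrow> inS S 0"
  unfolding inS_def by (simp add: subfieldD(1))
lemma inS_1: "is_subfield S \<Longrightarrow> inS S 1"
  using inS_const[of S 1] by (simp add: subfieldD one_pCons)
lemma inS_pCons: "inS S (pCons c g) \<longleftrightarrow> c \<in> S \<and> inS S g"
proof
  assume a: "inS S (pCons c g)"
  have "coeff (pCons c g) 0 \<in> S" using a by (simp only: inS_def)
  moreover have "coeff (pCons c g) (Suc i) \<in> S" for i using a by (simp only: inS_def)
  ultimately show "c \<in> S \<and> inS S g" by (simp add: inS_def)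
next
  assume "c \<in> S \<and> inS S g"
  thus "inS S (pCons c g)" unfolding inS_def by (simp add: coeff_pCons split: nat.split)
qed
lemma inS_pCons': "is_subfield S \<Longrightarrow> c \<in> S \<Longrightarrow> inS S g \<Longrightarrow> inS S (pCons c g)"
  by (simp add: inS_pCons)

lemma hom_onD:
  assumes "hom_on S h" "is_subfield S"
  shows "h 0 = 0" "h 1 = 1" "x \<in> S \<Longrightarrow> y \<in> S \<Longrightarrow> h (x + y) = h x + h y"
    "x \<in> S \<Longrightarrow> y \<in> S \<Longrightarrow> h (x * y) = h x * h y"
    "x \<in> S \<Longrightarrow> h (- x) = - h x" "x \<in> S \<Longrightarrow> y \<in> S \<Longrightarrow> h (x - y) = h x - h y"
    "x \<in> S \<Longrightarrow> h (inverse x) = inverse (h x)" "x \<in> S \<Longrightarrow> h x = 0 \<longleftrightarrow> x = 0"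
proof -
  have z: "0 \<in> S" using subfieldD[OF assms(2)] by simp
  have add: "x \<in> S \<Longrightarrow> y \<in> S \<Longrightarrow> h (x + y) = h x + h y" for x y
    using assms(1) unfolding hom_on_def by blast
  have mul: "x \<in> S \<Longrightarrow> y \<in> S \<Longrightarrow> h (x * y) = h x * h y" for x y
    using assms(1) unfolding hom_on_def by blast
  have e: "h (0 + 0) = h 0 + h 0" by (rule add[OF z z])
  show h0: "h 0 = 0" using e by (simp only: add_0_right add_cancel_right_right)
  show "h 1 = 1" using assms(1) unfolding hom_on_def by blast
  show "x \<in> S \<Longrightarrow> y \<in> S \<Longrightarrow> h (x + y) = h x + h y" by (rule add)
  show "x \<in> S \<Longrightarrow> y \<in> S \<Longrightarrow> h (x * y) = h x * h y" by (rule mul)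
  show neg: "h (- x) = - h x" if "x \<in> S" for x
  proof -
    have "h (x + - x) = h x + h (- x)" using add[OF that subfieldD(5)[OF assms(2) that]] .
    thus ?thesis using h0 by (simp add: eq_neg_iff_add_eq_0 add.commute)
  qed
  show "x \<in> S \<Longrightarrow> y \<in> S \<Longrightarrow> h (x - y) = h x - h y"
    using add[of x "- y"] neg[of y] subfieldD(5)[OF assms(2)] by simp
  show inv: "h (inverse x) = inverse (h x)" if "x \<in> S" for x
  proof (cases "x = 0")
    case True thus ?thesis using h0 by simp
  next
    case False
    have "h (x * inverse x) = h x * h (inverse x)" using mul[OF that subfieldD(6)[OF assms(2) that]] .
    hence "h x * h (inverse x) = 1" using False assms(1) by (simp add: hom_on_def)
    thus ?thesis by (simp add: inverse_unique)
  qed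
  show "h x = 0 \<longleftrightarrow> x = 0" if "x \<in> S" for x
  proof
    assume hx: "h x = 0"
    show "x = 0"
    proof (rule ccontr)
      assume "x \<noteq> 0"
      have "h (x * inverse x) = h x * h (inverse x)" using mul[OF that subfieldD(6)[OF assms(2) that]] .
      hence "h 1 = 0" using \<open>x \<noteq> 0\<close> hx by simp
      thus False using assms(1) by (simp add: hom_on_def)
    qed
  qed (simp add: h0)
qed

lemma hom_on_sum:
  assumes "hom_on S h" "is_subfield S" "\<And>i. i \<in> I \<Longrightarrow> f i \<in> S"
  shows "h (sum f I) = (\<Sum>i\<in>I. h (f i))"
  using assms(3)
proof (induction I rule: infinite_finite_induct)
  case (insert x F)
  have "h (f x + sum f F) = h (f x) + h (sum f F)"
    by (rule hom_onD(3)[OF assms(1,2)]) (use insert subfield_sum[OF assms(2), of F f] in auto)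
  thus ?case using insert by simp
qed (simp_all add: hom_onD[OF assms(1,2)])

lemma map_poly_hom_add:
  assumes "hom_on S h" "is_subfield S" "inS S g1" "inS S g2"
  shows "map_poly h (g1 + g2) = map_poly h g1 + map_poly h g2"
  by (rule poly_eqI) (use assms in \<open>simp add: coeff_map_poly hom_onD inS_def\<close>)

lemma map_poly_hom_diff:
  assumes "hom_on S h" "is_subfield S" "inS S g1" "inS S g2"
  shows "map_poly h (g1 - g2) = map_poly h g1 - map_poly h g2"
  by (rule poly_eqI) (use assms in \<open>simp add: coeff_map_poly hom_onD inS_def\<close>)

lemma map_poly_hom_mult:
  assumes "hom_on S h" "is_subfield S" "inS S g1" "inS S g2"
  shows "map_poly h (g1 * g2) = map_poly h g1 * map_poly h g2"
proof (rule poly_eqI)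
  fix k
  have "coeff (map_poly h (g1 * g2)) k = h (\<Sum>i\<le>k. coeff g1 i * coeff g2 (k - i))"
    by (simp add: coeff_map_poly hom_onD[OF assms(1,2)] coeff_mult)
  also have "\<dots> = (\<Sum>i\<le>k. h (coeff g1 i * coeff g2 (k - i)))"
    by (rule hom_on_sum[OF assms(1,2)]) (use assms(2-4) in \<open>simp add: inS_def subfieldD(4)\<close>)
  also have "\<dots> = (\<Sum>i\<le>k. h (coeff g1 i) * h (coeff g2 (k - i)))"
    by (intro sum.cong refl) (use assms in \<open>simp add: hom_onD inS_def\<close>)
  also have "\<dots> = coeff (map_poly h g1 * map_poly h g2) k"
    by (simp add: coeff_mult coeff_map_poly hom_onD[OF assms(1,2)])
  finally show "coeff (map_poly h (g1 * g2)) k = coeff (map_poly h g1 * map_poly h g2) k" .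
qed

lemma poly_inS_closed:
  assumes "is_subfield S" "inS S g" "x \<in> T" "S \<subseteq> T"
    and "\<And>u v. u \<in> T \<Longrightarrow> v \<in> T \<Longrightarrow> u + v \<in> T" "\<And>u v. u \<in> T \<Longrightarrow> v \<in> T \<Longrightarrow> u * v \<in> T"
  shows "poly g x \<in> T"
  using assms(2)
proof (induction g)
  case 0 thus ?case using assms(1,4) subfieldD(1) by auto
next
  case (pCons c g)
  thus ?case using assms by (auto simp: inS_pCons)
qed

lemma hom_poly:
  assumes "hom_on S h" "is_subfield S" "inS S g" "x \<in> S"
  shows "h (poly g x) = poly (map_poly h g) (h x)"
  using assms(3)
proof (induction g)
  case 0 thus ?case by (simp add: hom_onD[OF assms(1,2)])
next
  case (pCons c g)
  have cS: "c \<in> S" and gS: "inS S g" using pCons.prems by (auto simp: inS_pCons)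
  have pg: "poly g x \<in> S"
    by (rule poly_inS_closed[OF assms(2) gS assms(4)]) (simp_all add: subfieldD(3,4)[OF assms(2)])
  have "h (poly (pCons c g) x) = h c + h x * h (poly g x)"
    using cS pg assms(4) by (simp add: hom_onD[OF assms(1,2)] subfieldD[OF assms(2)])
  thus ?case using pCons.IH[OF gS] by (simp add: map_poly_pCons hom_onD[OF assms(1,2)])
qed

lemma inS_division:
  assumes S: "is_subfield S" and f: "inS S f" "lead_coeff f = 1" "degree f \<ge> 1"
  shows "inS S g \<Longrightarrow> \<exists>u r. inS S u \<and> inS S r \<and> g = f * u + r \<and> (r = 0 \<or> degree r < degree f)"
proof (induction "degree g" arbitrary: g rule: less_induct)
  case less
  show ?case
  proof (cases "g = 0 \<or> degree g < degree f")
    case True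
    thus ?thesis using less.prems S by (intro exI[of _ 0] exI[of _ g]) (auto simp: inS_0)
  next
    case False
    hence g0: "g \<noteq> 0" and dg: "degree f \<le> degree g" by auto
    define m where "m = monom (lead_coeff g) (degree g - degree f)"
    define g' where "g' = g - m * f"
    have mS: "inS S m" unfolding m_def using less.prems by (intro inS_monom S) (simp add: inS_def)
    have g'S: "inS S g'" unfolding g'_def by (intro inS_diff inS_mult S less.prems mS f)
    have f0: "f \<noteq> 0" using f(2) by auto
    have dmf: "degree (m * f) = degree g"
    proof -
      have m0: "m \<noteq> 0" unfolding m_def using g0 by simp
      have "degree (m * f) = degree m + degree f" by (rule degree_mult_eq[OF m0 f0])
      thus ?thesis unfolding m_def using dg g0 by (simp add: degree_monom_eq)
    qed
    have lmf: "lead_coeff (m * f) = lead_coeff g"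
      by (simp add: lead_coeff_mult m_def f(2) degree_monom_eq g0 lead_coeff_monom)
    have "g' = 0 \<or> degree g' < degree g"
    proof (rule ccontr)
      assume "\<not> (g' = 0 \<or> degree g' < degree g)"
      hence g'0: "g' \<noteq> 0" and "degree g' \<ge> degree g" by auto
      moreover have "degree g' \<le> degree g" unfolding g'_def using degree_diff_le[of g "degree g" "m * f"] dmf by simp
      ultimately have "degree g' = degree g" by simp
      moreover have "coeff g' (degree g) = 0" unfolding g'_def using lmf dmf by simp
      ultimately show False using g'0 by (metis leading_coeff_0_iff)
    qed
    thus ?thesis
    proof
      assume "g' = 0"
      hence "g = f * m + 0" unfolding g'_def by (simp add: mult.commute)
      thus ?thesis using mS S by (intro exI[of _ m] exI[of _ 0]) (simp add: inS_0)
    next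
      assume "degree g' < degree g"
      then obtain u r where ur: "inS S u" "inS S r" "g' = f * u + r" "r = 0 \<or> degree r < degree f"
        using less.hyps g'S by blast
      have "g = f * (u + m) + r" using ur(3) unfolding g'_def by (simp add: algebra_simps)
      thus ?thesis using ur inS_add[OF S ur(1) mS] by blast
    qed
  qed
qed

lemma minpoly_exists:
  assumes S: "is_subfield S" and alg: "\<exists>p. p \<noteq> 0 \<and> inS S p \<and> poly p \<alpha> = 0"
  obtains f where "inS S f" "lead_coeff f = 1" "poly f \<alpha> = 0" "degree f \<ge> 1"
    "\<And>g. inS S g \<Longrightarrow> poly g \<alpha> = 0 \<Longrightarrow> \<exists>u. inS S u \<and> g = f * u"
    "\<And>g. inS S g \<Longrightarrow> g \<noteq> 0 \<Longrightarrow> poly g \<alpha> = 0 \<Longrightarrow> degree f \<le> degree g"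
proof -
  define d where "d = (LEAST n. \<exists>p. p \<noteq> 0 \<and> inS S p \<and> poly p \<alpha> = 0 \<and> degree p = n)"
  have ex: "\<exists>n p. p \<noteq> 0 \<and> inS S p \<and> poly p \<alpha> = 0 \<and> degree p = n" using alg by blast
  have "\<exists>p. p \<noteq> 0 \<and> inS S p \<and> poly p \<alpha> = 0 \<and> degree p = d"
    unfolding d_def by (rule LeastI_ex[OF ex])
  then obtain p where p: "p \<noteq> 0" "inS S p" "poly p \<alpha> = 0" "degree p = d" by blast
  have pmin: "inS S g \<Longrightarrow> g \<noteq> 0 \<Longrightarrow> poly g \<alpha> = 0 \<Longrightarrow> d \<le> degree g" for g
    unfolding d_def by (rule Least_le) blast
  define f where "f = smult (inverse (lead_coeff p)) p"
  have lpS: "lead_coeff p \<in> S" using p(2) by (simp add: inS_def)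
  have fS: "inS S f" unfolding f_def by (intro inS_smult S p(2) subfieldD(6)[OF S lpS])
  have lp0: "lead_coeff p \<noteq> 0" using p(1) by (simp only: leading_coeff_0_iff) simp
  have lf: "lead_coeff f = 1" unfolding f_def using lp0 by (simp add: degree_smult_eq)
  have pf: "poly f \<alpha> = 0" unfolding f_def using p(3) by simp
  have df: "degree f = d" unfolding f_def using lp0 p(4) by (simp add: degree_smult_eq)
  have d1: "degree f \<ge> 1"
  proof (rule ccontr)
    assume "\<not> degree f \<ge> 1"
    hence "degree f = 0" by simp
    hence "[:coeff f 0:] = f" by (rule degree_0_id)
    moreover have "coeff f 0 = 1" using lf \<open>degree f = 0\<close> by simp
    ultimately have "f = [:1:]" by simp
    thus False using pf by simp
  qed
  have fmin: "inS S g \<Longrightarrow> g \<noteq> 0 \<Longrightarrow> poly g \<alpha> = 0 \<Longrightarrow> degree f \<le> degree g" for g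
    using pmin df by simp
  have fdvd: "\<exists>u. inS S u \<and> g = f * u" if gS: "inS S g" and g\<alpha>: "poly g \<alpha> = 0" for g
  proof -
    obtain u r where ur: "inS S u" "inS S r" "g = f * u + r" "r = 0 \<or> degree r < degree f"
      using inS_division[OF S fS lf d1 gS] by blast
    have "poly r \<alpha> = 0" using ur(3) g\<alpha> pf by simp
    hence "r = 0" using ur(4) fmin[OF ur(2)] by fastforce
    thus ?thesis using ur by auto
  qed
  show ?thesis by (rule that[OF fS lf pf d1 fdvd fmin])
qed

definition adj :: "'a::field set \<Rightarrow> 'a \<Rightarrow> 'a set" where
  "adj S \<alpha> = {poly g \<alpha> | g. inS S g}"

lemma adj_closed:
  assumes S: "is_subfield S"
  shows "S \<subseteq> adj S \<alpha>" "\<alpha> \<in> adj S \<alpha>"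
    "x \<in> adj S \<alpha> \<Longrightarrow> y \<in> adj S \<alpha> \<Longrightarrow> x + y \<in> adj S \<alpha>"
    "x \<in> adj S \<alpha> \<Longrightarrow> y \<in> adj S \<alpha> \<Longrightarrow> x * y \<in> adj S \<alpha>"
    "x \<in> adj S \<alpha> \<Longrightarrow> - x \<in> adj S \<alpha>"
proof -
  show "S \<subseteq> adj S \<alpha>"
  proof
    fix c assume "c \<in> S"
    hence "inS S [:c:]" by (rule inS_const[OF S])
    moreover have "c = poly [:c:] \<alpha>" by simp
    ultimately show "c \<in> adj S \<alpha>" unfolding adj_def by blast
  qed
  have "inS S [:0, 1:]" by (intro inS_pCons' S inS_const subfieldD[OF S])
  moreover have "\<alpha> = poly [:0, 1:] \<alpha>" by simp
  ultimately show "\<alpha> \<in> adj S \<alpha>" unfolding adj_def by blast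
  show "x \<in> adj S \<alpha> \<Longrightarrow> y \<in> adj S \<alpha> \<Longrightarrow> x + y \<in> adj S \<alpha>"
  proof -
    assume "x \<in> adj S \<alpha>" "y \<in> adj S \<alpha>"
    then obtain g1 g2 where "inS S g1" "x = poly g1 \<alpha>" "inS S g2" "y = poly g2 \<alpha>" unfolding adj_def by blast
    thus "x + y \<in> adj S \<alpha>" unfolding adj_def
      by (intro CollectI exI[of _ "g1 + g2"]) (simp add: inS_add[OF S])
  qed
  show "x \<in> adj S \<alpha> \<Longrightarrow> y \<in> adj S \<alpha> \<Longrightarrow> x * y \<in> adj S \<alpha>"
  proof -
    assume "x \<in> adj S \<alpha>" "y \<in> adj S \<alpha>"
    then obtain g1 g2 where "inS S g1" "x = poly g1 \<alpha>" "inS S g2" "y = poly g2 \<alpha>" unfolding adj_def by blast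
    thus "x * y \<in> adj S \<alpha>" unfolding adj_def
      by (intro CollectI exI[of _ "g1 * g2"]) (simp add: inS_mult[OF S])
  qed
  show "x \<in> adj S \<alpha> \<Longrightarrow> - x \<in> adj S \<alpha>"
  proof -
    assume "x \<in> adj S \<alpha>"
    then obtain g1 where "inS S g1" "x = poly g1 \<alpha>" unfolding adj_def by blast
    thus "- x \<in> adj S \<alpha>" unfolding adj_def
      by (intro CollectI exI[of _ "- g1"]) (simp add: inS_diff[OF S inS_0[OF S], of g1, simplified])
  qed
qed

lemma adj_subfield:
  assumes S: "is_subfield S"
    and alg: "\<And>y. \<exists>p. p \<noteq> 0 \<and> inS S p \<and> poly p y = 0"
  shows "is_subfield (adj S \<alpha>)"
proof -
  note cl = adj_closed[OF S, where \<alpha> = \<alpha>]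
  have inv: "inverse y \<in> adj S \<alpha>" if y: "y \<in> adj S \<alpha>" for y
  proof (cases "y = 0")
    case True thus ?thesis using cl(1) subfieldD(1)[OF S] by auto
  next
    case False
    obtain f where f: "inS S f" "lead_coeff f = 1" "poly f y = 0" "degree f \<ge> 1"
      and fdvd: "\<And>g. inS S g \<Longrightarrow> poly g y = 0 \<Longrightarrow> \<exists>u. inS S u \<and> g = f * u"
      and fmin: "\<And>g. inS S g \<Longrightarrow> g \<noteq> 0 \<Longrightarrow> poly g y = 0 \<Longrightarrow> degree f \<le> degree g"
      by (rule minpoly_exists[OF S alg[of y]]) blast
    obtain c f' where cf: "f = pCons c f'" by (cases f)
    have cS: "c \<in> S" and f'S: "inS S f'" using f(1) cf by (auto simp: inS_pCons)
    have f'0: "f' \<noteq> 0" using f(4) cf by auto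
    have eq: "c + y * poly f' y = 0" using f(3) cf by simp
    have c0: "c \<noteq> 0"
    proof
      assume "c = 0"
      hence "poly f' y = 0" using eq False by simp
      hence "degree f \<le> degree f'" using fmin[OF f'S f'0] by simp
      moreover have "degree f = Suc (degree f')" using cf f'0 by simp
      ultimately show False by simp
    qed
    have yP0: "y * poly f' y = - c" using eq by (simp add: eq_neg_iff_add_eq_0 add.commute)
    have "y * poly (smult (- inverse c) f') y = 1" using yP0 c0 by (simp add: field_simps)
    hence inv_eq: "inverse y = poly (smult (- inverse c) f') y" by (rule inverse_unique)
    have gS: "inS S (smult (- inverse c) f')"
      by (intro inS_smult S f'S subfieldD(5)[OF S] subfieldD(6)[OF S] cS)
    have "poly (smult (- inverse c) f') y \<in> adj S \<alpha>"
      by (rule poly_inS_closed[OF S gS y cl(1) cl(3) cl(4)])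
    thus ?thesis by (simp only: inv_eq)
  qed
  have z: "0 \<in> adj S \<alpha>" "1 \<in> adj S \<alpha>" using cl(1) subfieldD(1,2)[OF S] by auto
  show ?thesis unfolding is_subfield_def
  proof (intro conjI ballI)
    fix x y assume "x \<in> adj S \<alpha>" "y \<in> adj S \<alpha>"
    thus "x + y \<in> adj S \<alpha>" "x * y \<in> adj S \<alpha>" by (rule cl(3), rule cl(4))
  next
    fix x assume "x \<in> adj S \<alpha>"
    thus "- x \<in> adj S \<alpha>" "inverse x \<in> adj S \<alpha>" by (rule cl(5), rule inv)
  qed (rule z(1), rule z(2))
qed

lemma adj_subset:
  assumes S: "is_subfield S" and L: "is_subfield L" "S \<subseteq> L" "\<alpha> \<in> L"
  shows "adj S \<alpha> \<subseteq> L"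
proof
  fix x assume "x \<in> adj S \<alpha>"
  then obtain g where "inS S g" "x = poly g \<alpha>" unfolding adj_def by blast
  thus "x \<in> L" using poly_inS_closed[OF S _ L(3) L(2)] subfieldD[OF L(1)] by blast
qed

section \<open>Extension of homomorphisms\<close>

lemma extend_hom:
  fixes h :: "'a::field \<Rightarrow> 'b::field"
  assumes S: "is_subfield S" and h: "hom_on S h"
    and f0: "inS S f0" "f0 \<noteq> 0" "poly f0 \<alpha> = 0"
    and H: "\<And>D. D dvd map_poly h f0 \<Longrightarrow> degree D \<ge> 1 \<Longrightarrow> \<exists>b. poly D b = 0"
  shows "\<exists>h'. hom_on (adj S \<alpha>) h' \<and> (\<forall>x\<in>S. h' x = h x)"
proof -
  have alg0: "\<exists>p. p \<noteq> 0 \<and> inS S p \<and> poly p \<alpha> = 0" using f0 by blast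
  obtain f where f: "inS S f" "lead_coeff f = 1" "poly f \<alpha> = 0" "degree f \<ge> 1"
    and fdvd: "\<And>g. inS S g \<Longrightarrow> poly g \<alpha> = 0 \<Longrightarrow> \<exists>u. inS S u \<and> g = f * u"
    and fmin: "\<And>g. inS S g \<Longrightarrow> g \<noteq> 0 \<Longrightarrow> poly g \<alpha> = 0 \<Longrightarrow> degree f \<le> degree g"
    by (rule minpoly_exists[OF S alg0]) blast
  note hD = hom_onD[OF h S]
  obtain u where u: "inS S u" "f0 = f * u" using fdvd[OF f0(1) f0(3)] by blast
  have "map_poly h f0 = map_poly h f * map_poly h u"
    using u map_poly_hom_mult[OF h S f(1) u(1)] by simp
  hence dv: "map_poly h f dvd map_poly h f0" by simp
  have dhf: "degree (map_poly h f) = degree f"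
  proof (rule antisym)
    show "degree (map_poly h f) \<le> degree f"
      by (rule degree_le) (simp add: coeff_map_poly hD(1) coeff_eq_0)
    show "degree f \<le> degree (map_poly h f)"
      by (rule le_degree) (simp add: coeff_map_poly hD(1,2) f(2))
  qed
  obtain \<beta> where \<beta>: "poly (map_poly h f) \<beta> = 0" using H[OF dv] dhf f(4) by auto
  define h' where "h' = (\<lambda>y. poly (map_poly h (SOME g. inS S g \<and> poly g \<alpha> = y)) \<beta>)"
  have key: "h' (poly g \<alpha>) = poly (map_poly h g) \<beta>" if gS: "inS S g" for g
  proof -
    define g' where "g' = (SOME g'. inS S g' \<and> poly g' \<alpha> = poly g \<alpha>)"
    have "\<exists>g'. inS S g' \<and> poly g' \<alpha> = poly g \<alpha>" using gS by blast
    hence g'c: "inS S g' \<and> poly g' \<alpha> = poly g \<alpha>" unfolding g'_def by (rule someI_ex)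
    hence g': "inS S g'" "poly g' \<alpha> = poly g \<alpha>" by simp_all
    have dS: "inS S (g' - g)" by (rule inS_diff[OF S g'(1) gS])
    have "poly (g' - g) \<alpha> = 0" using g'(2) by simp
    then obtain w where w: "inS S w" "g' - g = f * w" using fdvd[OF dS] by blast
    have "map_poly h g' - map_poly h g = map_poly h f * map_poly h w"
      using map_poly_hom_diff[OF h S g'(1) gS] map_poly_hom_mult[OF h S f(1) w(1)] w(2) by simp
    hence "poly (map_poly h g' - map_poly h g) \<beta> = 0" using \<beta> by simp
    hence "poly (map_poly h g') \<beta> - poly (map_poly h g) \<beta> = 0" by simp
    thus ?thesis unfolding h'_def g'_def[symmetric] by simp
  qed
  have hom': "hom_on (adj S \<alpha>) h'"
    unfolding hom_on_def
  proof (intro conjI ballI)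
    have "h' (poly 1 \<alpha>) = poly (map_poly h 1) \<beta>" by (rule key[OF inS_1[OF S]])
    thus "h' 1 = 1" by (simp add: hD(2))
    fix x y assume "x \<in> adj S \<alpha>" "y \<in> adj S \<alpha>"
    then obtain g1 g2 where g: "inS S g1" "x = poly g1 \<alpha>" "inS S g2" "y = poly g2 \<alpha>"
      unfolding adj_def by blast
    have "h' (x + y) = h' (poly (g1 + g2) \<alpha>)" using g by simp
    also have "\<dots> = poly (map_poly h (g1 + g2)) \<beta>" by (rule key[OF inS_add[OF S g(1,3)]])
    also have "\<dots> = h' x + h' y" using g key map_poly_hom_add[OF h S g(1,3)] by simp
    finally show "h' (x + y) = h' x + h' y" .
    have "h' (x * y) = h' (poly (g1 * g2) \<alpha>)" using g by simp
    also have "\<dots> = poly (map_poly h (g1 * g2)) \<beta>" by (rule key[OF inS_mult[OF S g(1,3)]])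
    also have "\<dots> = h' x * h' y" using g key map_poly_hom_mult[OF h S g(1,3)] by simp
    finally show "h' (x * y) = h' x * h' y" .
  qed
  have ext: "h' x = h x" if "x \<in> S" for x
  proof -
    have "h' (poly [:x:] \<alpha>) = poly (map_poly h [:x:]) \<beta>" by (rule key[OF inS_const[OF S that]])
    thus ?thesis by (simp add: hD(1) map_poly_pCons)
  qed
  show ?thesis using hom' ext by blast
qed



lemma is_subfield_Inter: "(\<And>S. S \<in> F \<Longrightarrow> is_subfield S) \<Longrightarrow> is_subfield (\<Inter>F)"
  unfolding is_subfield_def by blast

lemma is_subfield_UNIV: "is_subfield (UNIV :: 'a::field set)"
  unfolding is_subfield_def by blast

lemma L_subfield: "is_subfield (split_field n a)"
  unfolding split_field_def by (rule is_subfield_Inter) blast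

lemma L_min: "is_subfield S \<Longrightarrow> range emb_K \<union> roots_addP n a \<subseteq> S \<Longrightarrow> split_field n a \<subseteq> S"
  unfolding split_field_def by blast

lemma K0_L: "range emb_K \<subseteq> split_field n a"
  unfolding split_field_def by blast

lemma V_L: "roots_addP n a \<subseteq> split_field n a"
  unfolding split_field_def by blast

lemma emb_K_hom: "emb_K (x + y) = emb_K x + emb_K y" "emb_K (x * y) = emb_K x * emb_K y"
  "emb_K 0 = 0" "emb_K 1 = 1" "emb_K (- x) = - emb_K x" "emb_K (inverse x) = inverse (emb_K x)"
  by (simp_all add: emb_K_def)

lemma K0_subfield: "is_subfield (range emb_K :: 'k::field ac set)"
  unfolding is_subfield_def
  by (auto simp: emb_K_hom[symmetric] simp del: emb_K_hom intro!: range_eqI)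

lemma emb_poly_emb_K: "emb_poly p = emb_K (Fract p 1)"
  by (simp add: emb_poly_def emb_K_def)

lemma emb_const_emb_K: "emb_const c = emb_K (Fract [:c:] 1)"
  by (simp add: emb_const_def emb_poly_emb_K)

definition PK :: "nat \<Rightarrow> (nat \<Rightarrow> 'k::{finite,field} poly) \<Rightarrow> 'k ratfun poly" where
  "PK n a = Pgen TYPE('k) n (\<lambda>i. Fract (a i) 1)"

definition PA :: "nat \<Rightarrow> (nat \<Rightarrow> 'k::{finite,field} poly) \<Rightarrow> 'k ac poly" where
  "PA n a = Pgen TYPE('k) n (\<lambda>i. emb_poly (a i))"

lemma addP_PA: "addP n a x = poly (PA n a) x"
  by (simp add: addP_def PA_def poly_Pgen)

lemma PA_map: "PA n a = map_poly emb_K (PK n a)"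
  unfolding PA_def PK_def
  by (subst map_poly_Pgen) (simp_all add: emb_K_hom emb_poly_emb_K)

lemma PM_map: "PM n a lam = map_poly (iota lam) (PK n a)"
  unfolding PM_def PK_def
  by (subst map_poly_Pgen) (simp_all add: iota_add iota_Fract1)

lemma PA_nz: "PA n a \<noteq> 0"
  unfolding PA_def by (rule Pgen_nz)

lemma V_finite: "finite (roots_addP n a)"
  unfolding roots_addP_def addP_PA by (rule poly_roots_finite[OF PA_nz])

lemma card_V:
  fixes a :: "nat \<Rightarrow> 'k::{finite,field} poly"
  assumes A0: "poly (a 0) lam \<noteq> 0"
  shows "card (roots_addP n a) = CARD('k) ^ n"
proof -
  have "a 0 \<noteq> 0" using A0 by auto
  hence "emb_poly (a 0) \<noteq> 0" using emb_poly_eq_iff[of "a 0" 0] by simp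
  thus ?thesis unfolding roots_addP_def addP_PA PA_def
    by (intro card_roots_Pgen_ac) simp
qed

lemma inS_PA: "range emb_K \<subseteq> S \<Longrightarrow> inS S (PA n a)"
  unfolding PA_map inS_def by (auto simp: coeff_map_poly emb_K_def)

lemma alg_over:
  fixes y :: "'k::field ac"
  assumes "range emb_K \<subseteq> S"
  shows "\<exists>p. p \<noteq> 0 \<and> inS S p \<and> poly p y = 0"
proof -
  obtain p :: "'k ratfun poly" where p: "p \<noteq> 0" "poly (map_poly to_ac p) y = 0"
    by (rule alg_closure_algebraic)
  have "map_poly to_ac p \<noteq> 0" using p(1) by (simp add: map_poly_eq_0_iff)
  moreover have "inS S (map_poly to_ac p)"
  proof -
    have "coeff (map_poly to_ac p) i = emb_K (coeff p i)" for i by (simp add: coeff_map_poly emb_K_def)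
    thus ?thesis using assms unfolding inS_def by auto
  qed
  ultimately show ?thesis using p(2) by blast
qed

lemma addP_add:
  fixes x y :: "'k::{finite,field} ac"
  shows "addP n a (x + y) = addP n a x + addP n a y"
  unfolding addP_def by (simp add: frob_ac_add distrib_left sum.distrib add_ac)

lemma V_add:
  fixes x y :: "'k::{finite,field} ac"
  shows "x \<in> roots_addP n a \<Longrightarrow> y \<in> roots_addP n a \<Longrightarrow> x + y \<in> roots_addP n a"
  unfolding roots_addP_def by (simp add: addP_add)

lemma V_scal:
  fixes x :: "'k::{finite,field} ac"
  shows "x \<in> roots_addP n a \<Longrightarrow> emb_const c * x \<in> roots_addP n a"
proof -
  assume "x \<in> roots_addP n a"
  hence "addP n a x = 0" by (simp add: roots_addP_def)
  hence "emb_const c * addP n a x = 0" by simp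
  thus ?thesis unfolding roots_addP_def addP_def
    by (simp add: power_mult_distrib algebra_simps sum_distrib_left)
qed

lemma V_0: "0 \<in> roots_addP n (a :: nat \<Rightarrow> 'k::{finite,field} poly)"
  unfolding roots_addP_def addP_def by simp

lemma V_sum:
  fixes f :: "'i \<Rightarrow> 'k::{finite,field} ac"
  shows "(\<And>i. i \<in> I \<Longrightarrow> f i \<in> roots_addP n a) \<Longrightarrow> sum f I \<in> roots_addP n a"
  by (induction I rule: infinite_finite_induct) (simp_all add: V_0 V_add)

theorem exists_tau:
  fixes a :: "nat \<Rightarrow> 'k::{finite,field} poly"
  assumes A0: "poly (a 0) lam \<noteq> 0"
  shows "\<exists>\<tau>. hom_on (split_field n a) \<tau> \<and> (\<forall>r. \<tau> (emb_K r) = iota lam r)"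
proof -
  define L where "L = split_field n a"
  define V where "V = roots_addP n a"
  define K0 where "K0 = (range emb_K :: 'k ac set)"
  have LS: "is_subfield L" unfolding L_def by (rule L_subfield)
  have K0L: "K0 \<subseteq> L" unfolding K0_def L_def by (rule K0_L)
  have VL: "V \<subseteq> L" unfolding V_def L_def by (rule V_L)
  have PMc: "card (RM n a lam) = degree (PM n a lam)"
    using RM_eq(2)[where a=a and lam=lam and n=n, OF A0] by (simp add: PM_def degree_Pgen)
  have PM0: "PM n a lam \<noteq> 0" unfolding PM_def by (rule Pgen_nz)
  have H: "\<exists>b. poly D b = 0" if D: "D dvd PM n a lam" "degree D \<ge> 1" for D
  proof (rule ccontr)
    assume nr: "\<not> (\<exists>b. poly D b = 0)"
    obtain E where E: "PM n a lam = D * E" using D(1) by (auto elim: dvdE)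
    have D0: "D \<noteq> 0" and E0: "E \<noteq> 0" using PM0 E by auto
    have dPM: "degree (PM n a lam) = degree D + degree E" using E D0 E0 by (simp add: degree_mult_eq)
    have sub: "RM n a lam \<subseteq> {y. poly E y = 0}" using nr E unfolding RM_def by auto
    have "card (RM n a lam) \<le> card {y. poly E y = 0}"
      by (rule card_mono[OF poly_roots_finite[OF E0] sub])
    also have "\<dots> \<le> degree E" by (rule card_poly_roots_bound[OF E0])
    finally show False using PMc dPM D(2) by simp
  qed
  define h0 where "h0 = (\<lambda>x. iota lam (of_ac x))"
  have K0S: "is_subfield K0" unfolding K0_def by (rule K0_subfield)
  have h0K: "h0 (emb_K r) = iota lam r" for r by (simp add: h0_def emb_K_def)
  have h0hom: "hom_on K0 h0"
    unfolding hom_on_def K0_def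
    by (auto simp: h0K emb_K_hom[symmetric] iota_add iota_mult simp del: emb_K_hom)
  have main: "\<exists>S h. is_subfield S \<and> K0 \<subseteq> S \<and> F \<subseteq> S \<and> S \<subseteq> L \<and> hom_on S h \<and> (\<forall>r. h (emb_K r) = iota lam r)"
    if "finite F" "F \<subseteq> V" for F
    using that
  proof (induction F rule: finite_induct)
    case empty
    show ?case using K0S K0L h0hom h0K by (intro exI[of _ K0] exI[of _ h0]) auto
  next
    case (insert v F)
    then obtain S h where S: "is_subfield S" "K0 \<subseteq> S" "F \<subseteq> S" "S \<subseteq> L" "hom_on S h"
      "\<forall>r. h (emb_K r) = iota lam r" by auto
    have vV: "v \<in> V" using insert.prems by auto
    have f0: "inS S (PA n a)" using inS_PA[of S n a] S(2) unfolding K0_def by simp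
    have pv: "poly (PA n a) v = 0" using vV unfolding V_def roots_addP_def addP_PA by simp
    have mapPA: "map_poly h (PA n a) = PM n a lam"
    proof -
      have "map_poly h (PA n a) = map_poly (h \<circ> emb_K) (PK n a)"
        unfolding PA_map by (rule map_poly_map_poly) (simp_all add: hom_onD[OF S(5) S(1)] emb_K_hom)
      also have "\<dots> = map_poly (iota lam) (PK n a)"
        by (rule map_poly_cong) (simp add: S(6))
      finally show ?thesis by (simp add: PM_map)
    qed
    obtain h' where h': "hom_on (adj S v) h'" "\<forall>x\<in>S. h' x = h x"
      using extend_hom[OF S(1) S(5) f0 PA_nz pv] H mapPA by auto
    have alg: "\<And>y. \<exists>p. p \<noteq> 0 \<and> inS S p \<and> poly p y = 0"
      by (rule alg_over) (use S(2) in \<open>simp add: K0_def\<close>)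
    have S'S: "is_subfield (adj S v)" by (rule adj_subfield[OF S(1) alg])
    have cl: "S \<subseteq> adj S v" "v \<in> adj S v" using adj_closed[OF S(1), where \<alpha> = v] by auto
    have "adj S v \<subseteq> L" by (rule adj_subset[OF S(1) LS S(4)]) (use vV VL in auto)
    moreover have "\<forall>r. h' (emb_K r) = iota lam r"
    proof
      fix r
      have "emb_K r \<in> S" using S(2) unfolding K0_def by auto
      thus "h' (emb_K r) = iota lam r" using h'(2) S(6) by simp
    qed
    ultimately show ?case using S'S cl S h'(1)
      by (intro exI[of _ "adj S v"] exI[of _ h']) auto
  qed
  obtain S h where S: "is_subfield S" "K0 \<subseteq> S" "V \<subseteq> S" "S \<subseteq> L" "hom_on S h"
      "\<forall>r. h (emb_K r) = iota lam r"
    using main[OF _ order_refl] V_finite unfolding V_def by blast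
  have "L \<subseteq> S" unfolding L_def by (rule L_min[OF S(1)]) (use S(2,3) in \<open>auto simp: K0_def V_def\<close>)
  hence "S = L" using S(4) by auto
  thus ?thesis using S(5,6) unfolding L_def by blast
qed



lemma ev_const: "ev lam [:c:] = fls_const (emb_const c)"
  by (simp add: ev_def evp_def map_poly_pCons fps_of_poly_const)

lemma map_PA_hom:
  fixes a :: "nat \<Rightarrow> 'k::{finite,field} poly"
  assumes S: "is_subfield S" "hom_on S h" "\<forall>r. h (emb_K r) = iota lam r"
  shows "map_poly h (PA n a) = PM n a lam"
proof -
  have "map_poly h (PA n a) = map_poly (h \<circ> emb_K) (PK n a)"
    unfolding PA_map by (rule map_poly_map_poly) (simp_all add: hom_onD[OF S(2) S(1)] emb_K_hom)
  also have "\<dots> = map_poly (iota lam) (PK n a)"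
    by (rule map_poly_cong) (simp add: S(3))
  finally show ?thesis by (simp add: PM_map)
qed

theorem corollary2p5:
  fixes n :: nat and a :: "nat \<Rightarrow> 'k::{finite,field} poly" and lam :: 'k
  assumes "poly (a 0) lam \<noteq> 0"
  shows "\<exists>\<sigma>\<in>galois_group n a.
           cyclic_on TYPE('k) (roots_addP n a) \<sigma>
         \<and> is_min_poly_on (roots_addP n a) \<sigma>
             (monom 1 n + (\<Sum>i<n. monom (poly (a i) lam) i))"
proof -
  note A0 = assms
  define L where "L = split_field n a"
  define V where "V = roots_addP n a"
  define m where "m = mpol n a lam"
  define R where "R = RM n a lam"
  define W where "W = Vl n a lam"
  have m_eq: "monom 1 n + (\<Sum>i<n. monom (poly (a i) lam) i) = m" unfolding m_def mpol_def ..
  have LS: "is_subfield L" unfolding L_def by (rule L_subfield)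
  have K0L: "emb_K r \<in> L" for r using K0_L[of n a] unfolding L_def by auto
  have VL: "V \<subseteq> L" unfolding V_def L_def by (rule V_L)
  have Vfin: "finite V" unfolding V_def by (rule V_finite)
  have cardV: "card V = CARD('k) ^ n" unfolding V_def by (rule card_V[where a=a and lam=lam and n=n, OF A0])
  have Rfin: "finite R" unfolding R_def by (rule RM_finite)
  have cardR: "card R = CARD('k) ^ n" unfolding R_def by (rule RM_eq(2)[where a=a and lam=lam and n=n, OF A0])
  have Wfin: "finite W" unfolding W_def by (rule finite_Vl)
  have cardW: "card W = CARD('k) ^ n" unfolding W_def by (rule card_Vl[where a=a and lam=lam and n=n, OF A0])
  obtain \<tau> where \<tau>: "hom_on L \<tau>" "\<forall>r. \<tau> (emb_K r) = iota lam r"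
    using exists_tau[where a=a and lam=lam and n=n, OF A0] unfolding L_def by blast
  note tD = hom_onD[OF \<tau>(1) LS]
  note LD = subfieldD[OF LS]
  have \<tau>inj: "inj_on \<tau> L"
  proof (rule inj_onI)
    fix x y assume xy: "x \<in> L" "y \<in> L" "\<tau> x = \<tau> y"
    hence "\<tau> (x - y) = 0" using tD(6) by simp
    moreover have "x - y \<in> L" using subfield_diff[OF LS xy(1,2)] .
    ultimately have "x - y = 0" using tD(8) by blast
    thus "x = y" by simp
  qed
  have inSPA: "inS L (PA n a)" by (rule inS_PA) (use K0L in auto)
  have mapPA: "map_poly \<tau> (PA n a) = PM n a lam" by (rule map_PA_hom[OF LS \<tau>])
  have \<tau>V: "\<tau> v \<in> R" if v: "v \<in> V" for v
  proof -
    have "\<tau> (poly (PA n a) v) = poly (map_poly \<tau> (PA n a)) (\<tau> v)"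
      by (rule hom_poly[OF \<tau>(1) LS inSPA]) (use v VL in auto)
    moreover have "poly (PA n a) v = 0" using v unfolding V_def roots_addP_def addP_PA by simp
    ultimately show ?thesis unfolding R_def RM_def using tD(1) mapPA by simp
  qed
  have \<tau>V_eq: "\<tau> ` V = R"
  proof (rule card_subset_eq[OF Rfin])
    show "\<tau> ` V \<subseteq> R" using \<tau>V by auto
    have "inj_on \<tau> V" using \<tau>inj VL by (rule inj_on_subset)
    thus "card (\<tau> ` V) = card R" using card_image cardV cardR by metis
  qed
  define \<rho> where "\<rho> = (\<lambda>v. \<tau> v $$ 0)"
  have \<rho>V: "\<rho> v \<in> W" "\<tau> v = Lf n a lam (\<rho> v)" if "v \<in> V" for v
    using RM_elem[where a=a and lam=lam and n=n and y="\<tau> v", OF A0] \<tau>V[OF that] unfolding \<rho>_def R_def W_def by auto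
  have \<rho>inj: "inj_on \<rho> V"
  proof (rule inj_onI)
    fix x y assume xy: "x \<in> V" "y \<in> V" "\<rho> x = \<rho> y"
    hence "\<tau> x = \<tau> y" using \<rho>V(2) by metis
    thus "x = y" using \<tau>inj xy VL by (meson inj_onD subsetD)
  qed
  have \<rho>surj: "\<rho> ` V = W"
  proof (rule card_subset_eq[OF Wfin])
    show "\<rho> ` V \<subseteq> W" using \<rho>V(1) by auto
    show "card (\<rho> ` V) = card W" using card_image[OF \<rho>inj] cardV cardW by simp
  qed
  have \<rho>0: "\<rho> 0 = 0" unfolding \<rho>_def using tD(1) by simp
  have \<rho>add: "\<rho> (x + y) = \<rho> x + \<rho> y" if "x \<in> V" "y \<in> V" for x y
  proof -
    have "x \<in> L" "y \<in> L" using that VL by auto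
    hence "\<tau> (x + y) = \<tau> x + \<tau> y" by (rule tD(3))
    thus ?thesis unfolding \<rho>_def by simp
  qed
  have tconst: "\<tau> (emb_const c) = fls_const (emb_const c)" for c
    using \<tau>(2) by (simp add: emb_const_emb_K iota_Fract1 ev_const)
  have \<rho>scal: "\<rho> (emb_const c * x) = emb_const c * \<rho> x" if "x \<in> V" for x c
  proof -
    have "emb_const c \<in> L" using K0L by (simp add: emb_const_emb_K)
    hence "\<tau> (emb_const c * x) = fls_const (emb_const c) * \<tau> x" using tD(4) that VL tconst by auto
    thus ?thesis unfolding \<rho>_def by simp
  qed
  have \<rho>sum: "\<rho> (sum f I) = (\<Sum>i\<in>I. \<rho> (f i))" if "\<And>i. i \<in> I \<Longrightarrow> f i \<in> V" for f :: "nat \<Rightarrow> 'k ac" and I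
    using that
  proof (induction I rule: infinite_finite_induct)
    case (insert x F)
    have "sum f F \<in> V" unfolding V_def by (rule V_sum) (use insert in \<open>auto simp: V_def\<close>)
    thus ?case using insert \<rho>add by simp
  qed (simp_all add: \<rho>0)
  define \<sigma> where "\<sigma> = (\<lambda>x. if x \<in> L then inv_into L \<tau> (frobL TYPE('k) (\<tau> x)) else x)"
  define S2 where "S2 = {x \<in> L. frobL TYPE('k) (\<tau> x) \<in> \<tau> ` L}"
  have S2sub: "is_subfield S2" unfolding is_subfield_def
  proof (intro conjI ballI)
    show "0 \<in> S2" unfolding S2_def using LD(1) tD(1) by (auto intro!: image_eqI[of 0])
    show "1 \<in> S2" unfolding S2_def using LD(2) tD(2) by (auto intro!: image_eqI[of 1])
    fix x y assume x: "x \<in> S2" and y: "y \<in> S2"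
    then obtain x' y' where x': "x' \<in> L" "frobL TYPE('k) (\<tau> x) = \<tau> x'" and y': "y' \<in> L" "frobL TYPE('k) (\<tau> y) = \<tau> y'"
      and xL: "x \<in> L" and yL: "y \<in> L" unfolding S2_def by auto
    have "frobL TYPE('k) (\<tau> (x + y)) = \<tau> (x' + y')" using x' y' xL yL tD(3) by (simp add: frobL_add)
    thus "x + y \<in> S2" unfolding S2_def using LD(3)[OF xL yL] LD(3)[OF x'(1) y'(1)] by auto
    have "frobL TYPE('k) (\<tau> (x * y)) = \<tau> (x' * y')" using x' y' xL yL tD(4) by (simp add: frobL_mult)
    thus "x * y \<in> S2" unfolding S2_def using LD(4)[OF xL yL] LD(4)[OF x'(1) y'(1)] by auto
  next
    fix x assume x: "x \<in> S2"
    then obtain x' where x': "x' \<in> L" "frobL TYPE('k) (\<tau> x) = \<tau> x'" and xL: "x \<in> L"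
      unfolding S2_def by auto
    have "frobL TYPE('k) (\<tau> (- x)) = \<tau> (- x')" using x' xL tD(5) by (simp add: frobL_uminus)
    thus "- x \<in> S2" unfolding S2_def using LD(5)[OF xL] LD(5)[OF x'(1)] by auto
    have "frobL TYPE('k) (\<tau> (inverse x)) = \<tau> (inverse x')" using x' xL tD(7) by (simp add: frobL_inverse)
    thus "inverse x \<in> S2" unfolding S2_def using LD(6)[OF xL] LD(6)[OF x'(1)] by auto
  qed
  have LS2: "L \<subseteq> S2"
    unfolding L_def
  proof (rule L_min[OF S2sub])
    show "range emb_K \<union> roots_addP n a \<subseteq> S2"
    proof
      fix x assume "x \<in> range emb_K \<union> roots_addP n a"
      thus "x \<in> S2"
      proof
        assume "x \<in> range emb_K"
        then obtain r where r: "x = emb_K r" by auto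
        have "frobL TYPE('k) (\<tau> x) = \<tau> x" using r \<tau>(2) by (simp add: frobL_iota)
        thus "x \<in> S2" unfolding S2_def using r K0L by auto
      next
        assume xV: "x \<in> roots_addP n a"
        hence "frobL TYPE('k) (\<tau> x) \<in> R" using \<tau>V RM_frobL unfolding V_def R_def by blast
        hence "frobL TYPE('k) (\<tau> x) \<in> \<tau> ` L" using \<tau>V_eq VL by auto
        thus "x \<in> S2" unfolding S2_def using xV VL V_def by auto
      qed
    qed
  qed
  have \<sigma>L: "\<sigma> x \<in> L" "\<tau> (\<sigma> x) = frobL TYPE('k) (\<tau> x)" if "x \<in> L" for x
  proof -
    have "frobL TYPE('k) (\<tau> x) \<in> \<tau> ` L" using LS2 that unfolding S2_def by auto
    thus "\<sigma> x \<in> L" "\<tau> (\<sigma> x) = frobL TYPE('k) (\<tau> x)"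
      unfolding \<sigma>_def using that by (simp_all add: inv_into_into f_inv_into_f)
  qed
  have \<sigma>eqI: "\<sigma> x = y" if "x \<in> L" "y \<in> L" "\<tau> y = frobL TYPE('k) (\<tau> x)" for x y
    using \<sigma>L[OF that(1)] that \<tau>inj by (metis inj_onD)
  have \<sigma>add: "\<sigma> (x + y) = \<sigma> x + \<sigma> y" if "x \<in> L" "y \<in> L" for x y
    by (rule \<sigma>eqI) (use that \<sigma>L LD tD in \<open>simp_all add: frobL_add\<close>)
  have \<sigma>mult: "\<sigma> (x * y) = \<sigma> x * \<sigma> y" if "x \<in> L" "y \<in> L" for x y
    by (rule \<sigma>eqI) (use that \<sigma>L LD tD in \<open>simp_all add: frobL_mult\<close>)
  have \<sigma>K: "\<sigma> (emb_K r) = emb_K r" for r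
    by (rule \<sigma>eqI) (use K0L \<tau>(2) in \<open>simp_all add: frobL_iota\<close>)
  have \<sigma>inj: "inj_on \<sigma> L"
  proof (rule inj_onI)
    fix x y assume xy: "x \<in> L" "y \<in> L" "\<sigma> x = \<sigma> y"
    hence "frobL TYPE('k) (\<tau> x) = frobL TYPE('k) (\<tau> y)" using \<sigma>L by metis
    hence "\<tau> x = \<tau> y" by (simp add: frobL_inj)
    thus "x = y" using \<tau>inj xy by (meson inj_onD)
  qed
  have \<sigma>V: "\<sigma> v \<in> V" "\<rho> (\<sigma> v) = (\<rho> v) ^ CARD('k)" if v: "v \<in> V" for v
  proof -
    have "frobL TYPE('k) (\<tau> v) \<in> R" using \<tau>V[OF v] RM_frobL unfolding R_def by blast
    then obtain v' where v': "v' \<in> V" "\<tau> v' = frobL TYPE('k) (\<tau> v)" using \<tau>V_eq by auto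
    have "\<sigma> v = v'" by (rule \<sigma>eqI) (use v v' VL in auto)
    thus "\<sigma> v \<in> V" using v' by simp
    show "\<rho> (\<sigma> v) = (\<rho> v) ^ CARD('k)" unfolding \<rho>_def using \<sigma>L(2) v VL by (auto simp: frobL_nth0)
  qed
  have \<sigma>Veq: "\<sigma> ` V = V"
    by (rule endo_inj_surj[OF Vfin]) (use \<sigma>V(1) inj_on_subset[OF \<sigma>inj VL] in auto)
  have \<sigma>1: "\<sigma> 1 = 1" by (rule \<sigma>eqI) (use LD tD in auto)
  have \<sigma>hom: "hom_on L \<sigma>" unfolding hom_on_def using \<sigma>1 \<sigma>add \<sigma>mult by blast
  note sD = hom_onD[OF \<sigma>hom LS]
  have \<sigma>img: "\<sigma> ` L = L"
  proof
    show "\<sigma> ` L \<subseteq> L" using \<sigma>L by auto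
    have sub: "is_subfield (\<sigma> ` L)" unfolding is_subfield_def
    proof (intro conjI ballI)
      show "0 \<in> \<sigma> ` L" using LD(1) sD(1) by (auto intro!: image_eqI[of 0])
      show "1 \<in> \<sigma> ` L" using LD(2) sD(2) by (auto intro!: image_eqI[of 1])
      fix x y assume "x \<in> \<sigma> ` L" "y \<in> \<sigma> ` L"
      then obtain x' y' where xy: "x' \<in> L" "y' \<in> L" "x = \<sigma> x'" "y = \<sigma> y'" by auto
      have "x + y = \<sigma> (x' + y')" using sD(3)[OF xy(1,2)] xy(3,4) by simp
      moreover have "x' + y' \<in> L" using LD(3)[OF xy(1,2)] .
      ultimately show "x + y \<in> \<sigma> ` L" by blast
      have "x * y = \<sigma> (x' * y')" using sD(4)[OF xy(1,2)] xy(3,4) by simp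
      moreover have "x' * y' \<in> L" using LD(4)[OF xy(1,2)] .
      ultimately show "x * y \<in> \<sigma> ` L" by blast
    next
      fix x assume "x \<in> \<sigma> ` L"
      then obtain x' where xx: "x' \<in> L" "x = \<sigma> x'" by auto
      have "- x = \<sigma> (- x')" using sD(5)[OF xx(1)] xx(2) by simp
      moreover have "- x' \<in> L" using LD(5)[OF xx(1)] .
      ultimately show "- x \<in> \<sigma> ` L" by blast
      have "inverse x = \<sigma> (inverse x')" using sD(7)[OF xx(1)] xx(2) by simp
      moreover have "inverse x' \<in> L" using LD(6)[OF xx(1)] .
      ultimately show "inverse x \<in> \<sigma> ` L" by blast
    qed
    show "L \<subseteq> \<sigma> ` L" unfolding L_def
    proof (rule L_min[OF sub[unfolded L_def]])
      have "range emb_K \<subseteq> \<sigma> ` L" using \<sigma>K K0L by (metis image_eqI image_subsetI)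
      moreover have "roots_addP n a \<subseteq> \<sigma> ` L" using \<sigma>Veq VL unfolding V_def by blast
      ultimately show "range emb_K \<union> roots_addP n a \<subseteq> \<sigma> ` split_field n a" unfolding L_def by blast
    qed
  qed
  have \<sigma>G: "\<sigma> \<in> galois_group n a"
    unfolding galois_group_def L_def[symmetric]
    using \<sigma>inj \<sigma>img \<sigma>add \<sigma>mult \<sigma>K by (simp add: bij_betw_def)
  have iter: "(\<sigma> ^^ i) v \<in> V \<and> \<rho> ((\<sigma> ^^ i) v) = (\<rho> v) ^ (CARD('k) ^ i)" if v: "v \<in> V" for v i
  proof (induction i)
    case 0 thus ?case using v by simp
  next
    case (Suc i)
    hence "(\<sigma> ^^ Suc i) v \<in> V" using \<sigma>V(1) by simp
    moreover have "\<rho> ((\<sigma> ^^ Suc i) v) = (\<rho> v) ^ (CARD('k) ^ Suc i)"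
      using Suc \<sigma>V(2) by (simp add: power_mult[symmetric] mult.commute)
    ultimately show ?case by blast
  qed
  have polyop: "poly_op g \<sigma> w \<in> V \<and> \<rho> (poly_op g \<sigma> w) = Lop g (\<rho> w)" if w: "w \<in> V" for g w
  proof -
    have mem: "emb_const (coeff g i) * (\<sigma> ^^ i) w \<in> V" for i
      using iter[OF w] V_scal unfolding V_def by blast
    have "poly_op g \<sigma> w \<in> V" unfolding poly_op_def V_def by (rule V_sum) (use mem in \<open>auto simp: V_def\<close>)
    moreover have "\<rho> (poly_op g \<sigma> w) = Lop g (\<rho> w)"
      unfolding poly_op_def Lop_def
      by (subst \<rho>sum) (use mem iter[OF w] iter[OF w, THEN conjunct1] \<rho>scal in auto)
    ultimately show ?thesis by blast
  qed
  have polyop0: "poly_op g \<sigma> w = 0 \<longleftrightarrow> Lop g (\<rho> w) = 0" if w: "w \<in> V" for g w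
  proof -
    have z: "0 \<in> V" unfolding V_def by (rule V_0)
    have "poly_op g \<sigma> w = 0 \<longleftrightarrow> \<rho> (poly_op g \<sigma> w) = \<rho> 0"
      using inj_on_eq_iff[OF \<rho>inj polyop[OF w, THEN conjunct1] z] by simp
    thus ?thesis using polyop[OF w] \<rho>0 by simp
  qed
  obtain v0 where G: "Gen m v0" using exists_Gen_mpol[where a=a and lam=lam and n=n, OF A0] unfolding m_def by blast
  have v0W: "v0 \<in> W" using G unfolding W_def Vl_def Gen_def m_def by simp
  then obtain v' where v': "v' \<in> V" "\<rho> v' = v0" using \<rho>surj by auto
  have dm: "degree m = n" unfolding m_def by (rule degree_mpol)
  have cyc: "cyclic_on TYPE('k) V \<sigma>"
    unfolding cyclic_on_def
  proof (intro bexI[OF _ v'(1)] ballI)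
    fix w assume w: "w \<in> V"
    have "\<rho> w \<in> W" using \<rho>V(1)[OF w] .
    hence "\<rho> w \<in> span_map n v0 ` ({..<n} \<rightarrow>\<^sub>E UNIV)"
      using Gen_span(1)[OF G] dm unfolding W_def Vl_def m_def[symmetric] using mpol_nz m_def by auto
    then obtain c where c: "\<rho> w = span_map n v0 c" by auto
    define w' where "w' = (\<Sum>i<n. emb_const (c i) * (\<sigma> ^^ i) v')"
    have mem: "emb_const (c i) * (\<sigma> ^^ i) v' \<in> V" for i
      using iter[OF v'(1)] V_scal unfolding V_def by blast
    have w'V: "w' \<in> V" unfolding w'_def V_def by (rule V_sum) (use mem in \<open>auto simp: V_def\<close>)
    have "\<rho> w' = (\<Sum>i<n. emb_const (c i) * v0 ^ (CARD('k) ^ i))"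
      unfolding w'_def by (subst \<rho>sum) (use mem iter[OF v'(1)] \<rho>scal v'(2) in auto)
    hence "\<rho> w' = \<rho> w" using c by (simp add: span_map_def)
    hence "w = w'" using inj_onD[OF \<rho>inj] w w'V by metis
    thus "\<exists>N c. w = (\<Sum>i<N. emb_const (c i) * (\<sigma> ^^ i) v')" unfolding w'_def by blast
  qed
  have mp: "is_min_poly_on V \<sigma> m"
    unfolding is_min_poly_on_def
  proof (intro conjI allI ballI impI)
    show "lead_coeff m = 1" unfolding m_def by (rule lead_mpol)
    fix w assume w: "w \<in> V"
    have "Lop m (\<rho> w) = 0" using \<rho>V(1)[OF w] unfolding W_def Vl_def m_def by simp
    thus "poly_op m \<sigma> w = 0" using polyop0[OF w] by simp
  next
    fix p assume "p \<noteq> 0 \<and> (\<forall>w\<in>V. poly_op p \<sigma> w = 0)"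
    hence p0: "p \<noteq> 0" and pw: "poly_op p \<sigma> v' = 0" using v'(1) by auto
    hence "Lop p v0 = 0" using polyop0[OF v'(1)] v'(2) by simp
    hence "m dvd p" using G by (simp add: Gen_def)
    thus "degree m \<le> degree p" using p0 by (rule dvd_imp_degree_le)
  qed
  show ?thesis unfolding m_eq using \<sigma>G cyc mp unfolding V_def by blast
qed


end
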